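(* Let $P$ be a homogeneous normalized random measure with independent increments with Lévy intensity $\rho(ds)\,aH(dx)$ (as in the context), and assume $\tilde{\tau}_2=\int_1^\infty s^2\rho(ds)<\infty$. Then for any $A\in\mathcal{X}$, $$\mathbb{E}[P(A)]=H(A),\qquad \mathrm{Var}(P(A))=H(A)(1-H(A))\,\mathcal{I}_a,$$ where $$\mathcal{I}_a=a\int_0^\infty\lambda\exp\Big\{-a\int_0^\infty(1-e^{-\lambda s})\rho(ds)\Big\}\int_0^\infty s^2e^{-\lambda s}\rho(ds)\,d\lambda.$$ Moreover, $\mathcal{I}_a=O(1/a)$ as $a\to\infty$.
   Context: $(\mathbb{X},\mathcal{X})$ is a complete separable metric space with its Borel $\sigma$-algebra. $\rho$ is a measure on $(0,\infty)$ with $\int_0^\infty\min(s,1)\rho(ds)<\infty$ and $\rho((0,\infty))=\infty$; $H$ is a non-atomic probability measure on $\mathbb{X}$ and $a>0$ (the concentration parameter). $\tilde{\mu}_a$ is the completely random measure $\tilde{\mu}_a(A)=\int_0^\infty\int_A s\,\tilde N(ds,dx)$, where $\tilde N$ is a Poisson random measure on $(0,\infty)\times\mathbb{X}$ with mean measure $\rho(ds)\,aH(dx)$; equivalently $\mathbb{E}[e^{-\int_A h\,d\tilde\mu_a}]=\exp\{-a\int_0^\infty\int_A(1-e^{-sh(x)})\rho(ds)H(dx)\}$. The hNRMI is $P(\cdot)=\tilde{\mu}_a(\cdot)/\tilde{\mu}_a(\mathbb{X})$. *)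

theory Defs
  imports "HOL-Probability.Probability"
begin

definition neg_exp_enn :: "ennreal \<Rightarrow> real" where
  "neg_exp_enn L = (if L = \<infinity> then 0 else exp (- enn2real L))"

definition hnrmi :: "('w \<Rightarrow> 'x measure) \<Rightarrow> 'w \<Rightarrow> 'x set \<Rightarrow> real" where
  "hnrmi \<mu> w A = enn2real (emeasure (\<mu> w) A) / enn2real (emeasure (\<mu> w) (space (\<mu> w)))"

definition Ia_integrand :: "real measure \<Rightarrow> real \<Rightarrow> real \<Rightarrow> real" where
  "Ia_integrand \<rho> a l =
     l * exp (- a * (\<integral>s. (1 - exp (- l * s)) \<partial>\<rho>)) * (\<integral>s. s\<^sup>2 * exp (- l * s) \<partial>\<rho>)"

definition Ia :: "real measure \<Rightarrow> real \<Rightarrow> real" where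
  "Ia \<rho> a = a * (LINT l:{0<..}|lborel. Ia_integrand \<rho> a l)"

end

theory Submission
  imports Defs
begin


lemma DCT_at:
  fixes f :: "real \<Rightarrow> 'a \<Rightarrow> real"
  assumes meas: "\<And>x. f x \<in> borel_measurable M" and Lm: "L \<in> borel_measurable M"
   and g: "integrable M g"
   and bound: "\<forall>\<^sub>F x in at l. AE s in M. \<bar>f x s\<bar> \<le> g s"
   and lim: "AE s in M. ((\<lambda>x. f x s) \<longlongrightarrow> L s) (at l)"
  shows "((\<lambda>x. \<integral>s. f x s \<partial>M) \<longlongrightarrow> (\<integral>s. L s \<partial>M)) (at l)"
  unfolding tendsto_at_iff_sequentially[where s=UNIV]
proof (intro allI impI)
  fix X :: "nat \<Rightarrow> real" assume X1: "\<forall>i. X i \<in> UNIV - {l}" and X2: "X \<longlonglongrightarrow> l"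
  have fX: "filterlim X (at l) sequentially"
    using X1 X2 by (auto simp: filterlim_at)
  from filterlim_iff[THEN iffD1, OF fX, rule_format, OF bound]
  obtain N where w: "\<And>n. N \<le> n \<Longrightarrow> AE s in M. \<bar>f (X n) s\<bar> \<le> g s"
    by (auto simp: eventually_sequentially)
  have "(\<lambda>n. \<integral>s. f (X (n + N)) s \<partial>M) \<longlonglongrightarrow> (\<integral>s. L s \<partial>M)"
  proof (rule integral_dominated_convergence[where w=g])
    show "AE s in M. norm (f (X (n + N)) s) \<le> g s" for n
      using w[of "n+N"] by auto
    show "AE s in M. (\<lambda>n. f (X (n + N)) s) \<longlonglongrightarrow> L s"
      using lim
    proof eventually_elim
      case (elim s)
      have "(\<lambda>n. f (X n) s) \<longlonglongrightarrow> L s"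
        using filterlim_compose[OF elim fX] by (simp add: o_def)
      then show ?case by (rule LIMSEQ_ignore_initial_segment)
    qed
  qed (use meas Lm g in auto)
  then show "((\<lambda>x. \<integral>s. f x s \<partial>M) \<circ> X) \<longlonglongrightarrow> (\<integral>s. L s \<partial>M)"
    unfolding o_def by (rule LIMSEQ_offset)
qed

lemma DERIV_integral:
  fixes f f' :: "real \<Rightarrow> 'a \<Rightarrow> real"
  assumes meas: "\<And>x. f x \<in> borel_measurable M" and meas': "f' l \<in> borel_measurable M"
   and int: "\<And>x. x \<in> {c<..<d} \<Longrightarrow> integrable M (f x)"
   and l: "l \<in> {c<..<d}" and g: "integrable M g"
   and der: "AE s in M. \<forall>x\<in>{c<..<d}. DERIV (\<lambda>x. f x s) x :> f' x s"
   and bnd: "AE s in M. \<forall>x\<in>{c<..<d}. \<bar>f' x s\<bar> \<le> g s"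
  shows "DERIV (\<lambda>x. \<integral>s. f x s \<partial>M) l :> (\<integral>s. f' l s \<partial>M)"
  unfolding has_field_derivative_iff
proof -
  have ev: "\<forall>\<^sub>F y in at l. y \<in> {c<..<d} \<and> y \<noteq> l"
    using l eventually_at_in_open[of "{c<..<d}" l] by simp
  have eq: "\<forall>\<^sub>F y in at l. (\<integral>s. (f y s - f l s) / (y - l) \<partial>M) =
      ((\<integral>s. f y s \<partial>M) - (\<integral>s. f l s \<partial>M)) / (y - l)"
    using ev by eventually_elim (use int l in auto)
  have "((\<lambda>y. \<integral>s. (f y s - f l s) / (y - l) \<partial>M) \<longlongrightarrow> (\<integral>s. f' l s \<partial>M)) (at l)"
  proof (rule DCT_at[where g=g])
    show "\<forall>\<^sub>F y in at l. AE s in M. \<bar>(f y s - f l s) / (y - l)\<bar> \<le> g s"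
      using ev
    proof eventually_elim
      case (elim y)
      note yy = elim
      show ?case using der bnd
      proof eventually_elim
        case (elim s)
        show ?case
        proof (cases "y < l")
          case True
          obtain z where z: "y < z" "z < l" "f l s - f y s = (l - y) * f' z s"
            using MVT2[OF True, of "\<lambda>x. f x s" "\<lambda>x. f' x s"] elim yy l
            by (metis atLeastAtMost_iff greaterThanLessThan_iff le_less_trans less_le_trans)
          have "(f y s - f l s) / (y - l) = f' z s" using z True by (simp add: field_simps)
          then show ?thesis using elim z yy l by auto
        next
          case False
          then have F: "l < y" using yy by auto
          obtain z where z: "l < z" "z < y" "f y s - f l s = (y - l) * f' z s"
            using MVT2[OF F, of "\<lambda>x. f x s" "\<lambda>x. f' x s"] elim yy l
            by (metis atLeastAtMost_iff greaterThanLessThan_iff le_less_trans less_le_trans)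
          have "(f y s - f l s) / (y - l) = f' z s" using z F by (simp add: field_simps)
          then show ?thesis using elim z yy l by auto
        qed
      qed
    qed
    show "AE s in M. ((\<lambda>y. (f y s - f l s) / (y - l)) \<longlongrightarrow> f' l s) (at l)"
      using der by eventually_elim (use l in \<open>auto simp: has_field_derivative_iff\<close>)
  qed (use meas meas' g in auto)
  then show "((\<lambda>y. ((\<integral>s. f y s \<partial>M) - (\<integral>s. f l s \<partial>M)) / (y - l)) \<longlongrightarrow> (\<integral>s. f' l s \<partial>M)) (at l)"
    by (rule Lim_transform_eventually[OF _ eq])
qed

lemma nn_integral_pow_exp:
  fixes t :: real assumes t: "t > 0"
  shows "(\<integral>\<^sup>+x. ennreal (x^k * exp (- x * t)) * indicator {0<..} x \<partial>lborel) = ennreal (fact k / t^(k+1))"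
proof -
  have E0: "(\<integral>\<^sup>+x. ennreal (x^k * exp (- x * t)) * indicator {0<..} x \<partial>lborel) =
        (\<integral>\<^sup>+x. ennreal (x^k * exp (- x * t)) * indicator {0..} x \<partial>lborel)"
    by (intro nn_integral_cong_AE, use AE_lborel_singleton[of 0] in eventually_elim)
       (auto split: split_indicator)
  have "ennreal (real_of_nat (fact k)) = (\<integral>\<^sup>+x. ennreal (x^k * exp (-x)) * indicator {0 ..} x \<partial>lborel)"
    using nn_intergal_power_times_exp_Ici[of k] by simp
  then have "ennreal (fact k) = ennreal t * (\<integral>\<^sup>+x. ennreal ((0 + t * x)^k * exp (-(0 + t * x))) * indicator {0 ..} (0 + t * x) \<partial>lborel)"
    using nn_integral_real_affine[of "\<lambda>x. ennreal (x^k * exp (-x)) * indicator {0 ..} x" t 0] t by simp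
  also have "(\<lambda>x. ennreal ((0 + t * x)^k * exp (-(0 + t * x))) * indicator {0 ..} (0 + t * x)) =
     (\<lambda>x. ennreal (t^k) * (ennreal (x^k * exp (- x * t)) * indicator {0..} x))"
    using t by (auto simp: fun_eq_iff power_mult_distrib ennreal_mult' zero_le_mult_iff mult_ac split: split_indicator)
  also have "(\<integral>\<^sup>+x. ennreal (t^k) * (ennreal (x^k * exp (- x * t)) * indicator {0..} x) \<partial>lborel)
     = ennreal (t^k) * (\<integral>\<^sup>+x. ennreal (x^k * exp (- x * t)) * indicator {0..} x \<partial>lborel)"
    by (rule nn_integral_cmult) auto
  finally have *: "ennreal (fact k) = ennreal (t^(k+1)) * (\<integral>\<^sup>+x. ennreal (x^k * exp (- x * t)) * indicator {0..} x \<partial>lborel)"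
    using t by (simp add: ennreal_mult' mult.assoc)
  have "(\<integral>\<^sup>+x. ennreal (x^k * exp (- x * t)) * indicator {0..} x \<partial>lborel) =
      ennreal (1 / t^(k+1)) * ennreal (fact k)"
    unfolding * using t
    by (simp add: mult.assoc[symmetric] ennreal_mult'[symmetric] del: ennreal_mult')
  then show ?thesis using t E0 by (simp add: ennreal_mult'[symmetric] del: ennreal_mult')
qed


lemma pow_le_exp:
  fixes x :: real assumes "x \<ge> 0" "k > 0"
  shows "x^k \<le> real k ^ k * exp x"
proof -
  have "(x / real k)^k \<le> (1 + x / real k)^k"
    using assms by (intro power_mono) auto
  also have "\<dots> \<le> exp x"
    using assms by (intro exp_ge_one_plus_x_over_n_power_n) auto
  finally have "(x / real k)^k \<le> exp x" .
  then show ?thesis using assms by (simp add: power_divide field_simps)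
qed

lemma pow_exp_bound:
  fixes l s :: real assumes l: "l > 0" and s: "s > 0" and k: "k > 0"
  shows "s^k * exp (- l * s) \<le> ((real k / l)^k + 1) * min s 1"
proof (cases "s \<le> 1")
  case True
  have "s^k \<le> s" using True s k by (simp add: power_decreasing[of 1 k s, simplified])
  moreover have "exp (- l * s) \<le> 1" using l s by simp
  ultimately have "s^k * exp (- l * s) \<le> s * 1"
    using s by (intro mult_mono) auto
  also have "\<dots> \<le> ((real k / l)^k + 1) * s" using s l by (simp add: distrib_right)
  also have "\<dots> = ((real k / l)^k + 1) * min s 1" using True by simp
  finally show ?thesis .
next
  case False
  have "s^k = (l * s)^k / l^k" using l by (simp add: power_mult_distrib)
  also have "\<dots> \<le> (real k ^ k * exp (l * s)) / l^k"
    by (rule divide_right_mono) (use pow_le_exp[of "l * s" k] l s k in auto)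
  also have "\<dots> = (real k / l)^k * exp (l * s)" by (simp add: power_divide)
  finally have "s^k * exp (- l * s) \<le> (real k / l)^k * exp (l * s) * exp (- l * s)"
    by (intro mult_right_mono) auto
  also have "\<dots> = (real k / l)^k" by (simp add: mult.assoc flip: exp_add)
  also have "\<dots> \<le> ((real k / l)^k + 1) * min s 1" using False by simp
  finally show ?thesis .
qed

locale levy =
  fixes \<rho> :: "real measure"
  assumes rho_sets: "sets \<rho> = sets borel"
    and rho_support: "emeasure \<rho> {..0} = 0"
    and rho_levy: "(\<integral>\<^sup>+ s. ennreal (min s 1) \<partial>\<rho>) < \<infinity>"
    and rho_infinite: "emeasure \<rho> {0<..} = \<infinity>"
    and tau2: "(\<integral>\<^sup>+ s. ennreal (indicator {1..} s * s\<^sup>2) \<partial>\<rho>) < \<infinity>"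
begin

definition psi where "psi l = (\<integral>s. (1 - exp (- l * s)) \<partial>\<rho>)"
definition tau where "tau k l = (\<integral>s. s^k * exp (- l * s) \<partial>\<rho>)"

lemma meas_rho: "f \<in> borel_measurable borel \<Longrightarrow> f \<in> borel_measurable \<rho>"
  by (metis measurable_cong_sets rho_sets)

lemma space_rho: "space \<rho> = UNIV"
  using sets_eq_imp_space_eq[OF rho_sets] by simp

lemma AE_pos: "AE s in \<rho>. s > 0"
proof (rule AE_I')
  show "{..0} \<in> null_sets \<rho>" using rho_support rho_sets by (auto simp: null_sets_def)
  show "{s \<in> space \<rho>. \<not> 0 < s} \<subseteq> {..0}" by auto
qed

lemma int_min: "integrable \<rho> (\<lambda>s. min s 1)"
proof (rule integrableI_nonneg)
  show "(\<lambda>s. min s 1) \<in> borel_measurable \<rho>" by (rule meas_rho) measurable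
  show "AE s in \<rho>. 0 \<le> min s 1" using AE_pos by eventually_elim auto
  show "(\<integral>\<^sup>+ s. ennreal (min s 1) \<partial>\<rho>) < \<infinity>" using rho_levy .
qed

lemma int_sq1: "integrable \<rho> (\<lambda>s. indicator {1..} s * s\<^sup>2)"
proof (rule integrableI_nonneg)
  show "(\<lambda>s. indicator {1..} s * s\<^sup>2) \<in> borel_measurable \<rho>" by (rule meas_rho) measurable
  show "AE s in \<rho>. 0 \<le> indicator {1..} s * s\<^sup>2" by (intro AE_I2) auto
  show "(\<integral>\<^sup>+ s. ennreal (indicator {1..} s * s\<^sup>2) \<partial>\<rho>) < \<infinity>" using tau2 .
qed

lemma int_dom:
  fixes f g :: "real \<Rightarrow> real"
  assumes "f \<in> borel_measurable \<rho>" "integrable \<rho> g" "AE s in \<rho>. s > 0 \<longrightarrow> \<bar>f s\<bar> \<le> g s"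
  shows "integrable \<rho> f"
proof -
  have "AE s in \<rho>. norm (f s) \<le> norm (g s)" using assms(3) AE_pos
  proof eventually_elim
    case (elim s)
    then have "\<bar>f s\<bar> \<le> g s" by simp
    then show ?case using abs_ge_self[of "g s"] by simp
  qed
  from Bochner_Integration.integrable_bound[OF assms(2) assms(1) this] show ?thesis .
qed

lemma int_psi: assumes "l \<ge> 0" shows "integrable \<rho> (\<lambda>s. 1 - exp (- l * s))"
proof (rule int_dom[where g="\<lambda>s. (l + 1) * min s 1"])
  show "integrable \<rho> (\<lambda>s. (l + 1) * min s 1)" using int_min by simp
  show "AE s in \<rho>. s > 0 \<longrightarrow> \<bar>1 - exp (- l * s)\<bar> \<le> (l + 1) * min s 1"
  proof (intro AE_I2 impI)
    fix s :: real assume s: "s > 0"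
    have e1: "exp (- l * s) \<le> 1" using assms s by simp
    have e2: "1 - l * s \<le> exp (- l * s)" using exp_ge_add_one_self[of "- l * s"] by simp
    show "\<bar>1 - exp (- l * s)\<bar> \<le> (l + 1) * min s 1"
    proof (cases "s \<le> 1")
      case True then show ?thesis using e1 e2 assms s by (simp add: algebra_simps)
    next
      case False
      have m: "min s 1 = 1" using False by simp
      have "0 < exp (- l * s)" by simp
      then have "\<bar>1 - exp (- l * s)\<bar> \<le> 1" using e1 by linarith
      moreover have "(l + 1) * min s 1 = l + 1" using m by simp
      ultimately show ?thesis using assms by linarith
    qed
  qed
qed (rule meas_rho, measurable)

lemma int_tau: assumes "l > 0" "k > 0" shows "integrable \<rho> (\<lambda>s. s^k * exp (- l * s))"
proof (rule int_dom[where g="\<lambda>s. ((real k / l)^k + 1) * min s 1"])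
  show "integrable \<rho> (\<lambda>s. ((real k / l)^k + 1) * min s 1)" using int_min by simp
  show "AE s in \<rho>. s > 0 \<longrightarrow> \<bar>s^k * exp (- l * s)\<bar> \<le> ((real k / l)^k + 1) * min s 1"
  proof (intro AE_I2 impI)
    fix s :: real assume s: "s > 0"
    have "0 \<le> s^k * exp (- l * s)" using s by simp
    then show "\<bar>s^k * exp (- l * s)\<bar> \<le> ((real k / l)^k + 1) * min s 1"
      using pow_exp_bound[OF assms(1) s assms(2)] by linarith
  qed
qed (rule meas_rho, measurable)

lemma int_tau0: assumes "l \<ge> 0" "k > 0" "k \<le> 2" shows "integrable \<rho> (\<lambda>s. s^k * exp (- l * s))"
proof (rule int_dom[where g="\<lambda>s. min s 1 + indicator {1..} s * s\<^sup>2"])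
  show "integrable \<rho> (\<lambda>s. min s 1 + indicator {1..} s * s\<^sup>2)" using int_min int_sq1 by simp
  show "AE s in \<rho>. s > 0 \<longrightarrow> \<bar>s^k * exp (- l * s)\<bar> \<le> min s 1 + indicator {1..} s * s\<^sup>2"
  proof (intro AE_I2 impI)
    fix s :: real assume s: "s > 0"
    have e1: "exp (- l * s) \<le> 1" using assms s by simp
    have "s^k \<le> min s 1 + indicator {1..} s * s\<^sup>2"
    proof (cases "s \<le> 1")
      case True
      then have "s^k \<le> s" using s assms by (simp add: power_decreasing[of 1 k s, simplified])
      then show ?thesis using True by (simp add: indicator_def)
    next
      case False
      then have "s^k \<le> s^2" using assms by (intro power_increasing) auto
      moreover have "min s 1 + indicator {1..} s * s\<^sup>2 = 1 + s^2" using False by (simp add: indicator_def)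
      ultimately show ?thesis by linarith
    qed
    then show "\<bar>s^k * exp (- l * s)\<bar> \<le> min s 1 + indicator {1..} s * s\<^sup>2"
    proof -
      have "0 \<le> s^k * exp (- l * s)" using s by simp
      moreover have "s^k * exp (- l * s) \<le> s^k * 1"
        using e1 s by (intro mult_left_mono) auto
      ultimately show ?thesis using \<open>s^k \<le> _\<close> by linarith
    qed
  qed
qed (rule meas_rho, measurable)

end


context levy begin

lemma bnd_shift:
  assumes l: "l > 0" and k: "k > 0" and x: "x > l/2" and s: "s > 0"
  shows "\<bar>s^k * exp (- x * s)\<bar> \<le> ((real k / (l/2))^k + 1) * min s 1"
proof -
  have "exp (- x * s) \<le> exp (- (l/2) * s)" using x s by simp
  then have "s^k * exp (- x * s) \<le> s^k * exp (- (l/2) * s)"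
    using s by (intro mult_left_mono) auto
  also have "\<dots> \<le> ((real k / (l/2))^k + 1) * min s 1"
    using pow_exp_bound[of "l/2" s k] l s k by simp
  finally show ?thesis using s by simp
qed

lemma DERIV_psi: assumes l: "l > 0" shows "DERIV psi l :> tau 1 l"
proof -
  have "DERIV (\<lambda>x. \<integral>s. (1 - exp (- x * s)) \<partial>\<rho>) l :> (\<integral>s. s^1 * exp (- l * s) \<partial>\<rho>)"
  proof (rule DERIV_integral[where c="l/2" and d="2*l" and g="\<lambda>s. ((real 1 / (l/2))^1 + 1) * min s 1"])
    show "(\<lambda>s. 1 - exp (- x * s)) \<in> borel_measurable \<rho>" for x by (rule meas_rho) measurable
    show "(\<lambda>s. s^1 * exp (- l * s)) \<in> borel_measurable \<rho>" by (rule meas_rho) measurable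
    show "integrable \<rho> (\<lambda>s. 1 - exp (- x * s))" if "x \<in> {l/2<..<2*l}" for x
      using that l by (intro int_psi) auto
    show "l \<in> {l/2<..<2*l}" using l by auto
    show "integrable \<rho> (\<lambda>s. ((real 1 / (l/2))^1 + 1) * min s 1)" using int_min by simp
    show "AE s in \<rho>. \<forall>x\<in>{l/2<..<2*l}. DERIV (\<lambda>x. 1 - exp (- x * s)) x :> s^1 * exp (- x * s)"
      by (intro AE_I2 ballI) (auto intro!: derivative_eq_intros)
    show "AE s in \<rho>. \<forall>x\<in>{l/2<..<2*l}. \<bar>s^1 * exp (- x * s)\<bar> \<le> ((real 1 / (l/2))^1 + 1) * min s 1"
      using AE_pos
    proof eventually_elim
      case (elim s)
      show ?case using bnd_shift[OF l _ _ elim, of 1] by auto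
    qed
  qed
  then show ?thesis unfolding psi_def[abs_def] tau_def by simp
qed

lemma DERIV_tau: assumes l: "l > 0" and k: "k > 0" shows "DERIV (tau k) l :> - tau (Suc k) l"
proof -
  have "DERIV (\<lambda>x. \<integral>s. s^k * exp (- x * s) \<partial>\<rho>) l :> (\<integral>s. - (s^(Suc k) * exp (- l * s)) \<partial>\<rho>)"
  proof (rule DERIV_integral[where c="l/2" and d="2*l" and g="\<lambda>s. ((real (Suc k) / (l/2))^(Suc k) + 1) * min s 1"])
    show "(\<lambda>s. s^k * exp (- x * s)) \<in> borel_measurable \<rho>" for x by (rule meas_rho) measurable
    show "(\<lambda>s. - (s^(Suc k) * exp (- l * s))) \<in> borel_measurable \<rho>" by (rule meas_rho) measurable
    show "integrable \<rho> (\<lambda>s. s^k * exp (- x * s))" if "x \<in> {l/2<..<2*l}" for x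
      using that l k by (intro int_tau) auto
    show "l \<in> {l/2<..<2*l}" using l by auto
    show "integrable \<rho> (\<lambda>s. ((real (Suc k) / (l/2))^(Suc k) + 1) * min s 1)" using int_min by simp
    show "AE s in \<rho>. \<forall>x\<in>{l/2<..<2*l}. DERIV (\<lambda>x. s^k * exp (- x * s)) x :> - (s^(Suc k) * exp (- x * s))"
      by (intro AE_I2 ballI) (auto intro!: derivative_eq_intros)
    show "AE s in \<rho>. \<forall>x\<in>{l/2<..<2*l}. \<bar>- (s^(Suc k) * exp (- x * s))\<bar> \<le> ((real (Suc k) / (l/2))^(Suc k) + 1) * min s 1"
      using AE_pos
    proof eventually_elim
      case (elim s)
      show ?case using bnd_shift[OF l _ _ elim, of "Suc k"] by auto
    qed
  qed
  then show ?thesis unfolding tau_def[abs_def] by simp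
qed

lemma cont_psi: "continuous_on {0<..} psi"
  by (intro continuous_at_imp_continuous_on ballI DERIV_isCont[OF DERIV_psi]) auto

lemma cont_tau: assumes "k > 0" shows "continuous_on {0<..} (tau k)"
  by (intro continuous_at_imp_continuous_on ballI DERIV_isCont[OF DERIV_tau]) (use assms in auto)

lemma psi_mono: assumes "0 \<le> l" "l \<le> l'" shows "psi l \<le> psi l'"
  unfolding psi_def
proof (rule integral_mono_AE)
  show "integrable \<rho> (\<lambda>s. 1 - exp (- l * s))" using assms by (intro int_psi) auto
  show "integrable \<rho> (\<lambda>s. 1 - exp (- l' * s))" using assms by (intro int_psi) auto
  show "AE s in \<rho>. 1 - exp (- l * s) \<le> 1 - exp (- l' * s)"
    using AE_pos
  proof eventually_elim
    case (elim s)
    then show ?case using assms by (simp add: mult_right_mono)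
  qed
qed

lemma psi_0[simp]: "psi 0 = 0" by (simp add: psi_def)

lemma psi_nonneg: "l \<ge> 0 \<Longrightarrow> psi l \<ge> 0"
  using psi_mono[of 0 l] by simp

lemma tau_nonneg: "tau k l \<ge> 0"
  unfolding tau_def
  by (rule integral_nonneg_AE) (use AE_pos in \<open>eventually_elim, simp\<close>)

lemma tau2_le: assumes "l \<ge> 0" shows "tau 2 l \<le> tau 2 0"
  unfolding tau_def
proof (rule integral_mono_AE)
  show "integrable \<rho> (\<lambda>s. s^2 * exp (- l * s))" using assms by (intro int_tau0) auto
  show "integrable \<rho> (\<lambda>s. s^2 * exp (- 0 * s))" by (intro int_tau0) auto
  show "AE s in \<rho>. s^2 * exp (- l * s) \<le> s^2 * exp (- 0 * s)"
    using AE_pos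
  proof eventually_elim
    case (elim s)
    then show ?case using assms by (simp add: mult_left_le)
  qed
qed

lemma conv_pt: fixes l s :: real assumes "0 \<le> l" "l \<le> 1" shows "l * (1 - exp (- s)) \<le> 1 - exp (- l * s)"
proof -
  have "exp ((1 - l) *\<^sub>R 0 + l *\<^sub>R (- s)) \<le> (1 - l) * exp 0 + l * exp (- s)"
    using convex_onD[OF exp_convex, of l 0 "- s"] assms by simp
  then show ?thesis by (simp add: algebra_simps)
qed

lemma psi_lower: assumes "0 \<le> l" "l \<le> 1" shows "l * psi 1 \<le> psi l"
proof -
  have "l * psi 1 = (\<integral>s. l * (1 - exp (- 1 * s)) \<partial>\<rho>)" unfolding psi_def by simp
  also have "\<dots> \<le> psi l" unfolding psi_def
  proof (rule integral_mono)
    show "integrable \<rho> (\<lambda>s. l * (1 - exp (- 1 * s)))" using int_psi[of 1] by simp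
    show "integrable \<rho> (\<lambda>s. 1 - exp (- l * s))" using int_psi assms by simp
    show "l * (1 - exp (- 1 * s)) \<le> 1 - exp (- l * s)" for s using conv_pt[OF assms] by simp
  qed
  finally show ?thesis .
qed

lemma psi1_pos: "psi 1 > 0"
proof (rule ccontr)
  assume "\<not> psi 1 > 0"
  then have "psi 1 = 0" using psi_nonneg[of 1] by simp
  have nn: "AE s in \<rho>. 0 \<le> 1 - exp (- 1 * s)" using AE_pos by eventually_elim simp
  have i1: "integrable \<rho> (\<lambda>s. 1 - exp (- 1 * s))" by (rule int_psi) simp
  have "AE s in \<rho>. 1 - exp (- 1 * s) = 0"
    using \<open>psi 1 = 0\<close> integral_nonneg_eq_0_iff_AE[OF i1 nn] unfolding psi_def by simp
  then have "AE s in \<rho>. False"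
    using AE_pos by eventually_elim simp
  then have "ae_filter \<rho> = bot" by (simp add: eventually_False)
  then have "emeasure \<rho> (space \<rho>) = 0" by (simp add: ae_filter_eq_bot_iff)
  moreover have "emeasure \<rho> {0<..} \<le> emeasure \<rho> (space \<rho>)"
    by (intro emeasure_mono) (auto simp: space_rho rho_sets)
  ultimately show False using rho_infinite by simp
qed

end


context levy begin

lemma psi_nn: assumes "l \<ge> 0" shows "ennreal (psi l) = (\<integral>\<^sup>+ s. ennreal (1 - exp (- l * s)) \<partial>\<rho>)"
  unfolding psi_def
proof (rule nn_integral_eq_integral[symmetric])
  show "integrable \<rho> (\<lambda>s. 1 - exp (- l * s))" using assms by (rule int_psi)
  show "AE s in \<rho>. 0 \<le> 1 - exp (- l * s)" using AE_pos
    by eventually_elim (use assms in simp)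
qed

lemma psi_unbounded: "\<exists>n::nat. psi (real n) > Z"
proof (rule ccontr)
  assume "\<not> (\<exists>n::nat. psi (real n) > Z)"
  then have le: "\<And>n::nat. psi (real n) \<le> Z" by (simp add: not_less)
  let ?f = "\<lambda>(n::nat) s. ennreal (1 - exp (- real n * s))"
  have "(\<lambda>n. integral\<^sup>N \<rho> (?f n)) \<longlonglongrightarrow> integral\<^sup>N \<rho> (\<lambda>s. indicator {0<..} s)"
  proof (rule nn_integral_LIMSEQ)
    show "incseq ?f"
    proof (intro incseq_SucI le_funI)
      fix n :: nat and s :: real
      show "?f n s \<le> ?f (Suc n) s"
      proof (cases "s \<ge> 0")
        case True then show ?thesis by (intro ennreal_leI) (simp add: algebra_simps)
      next
        case False
        then have "1 - exp (- real n * s) \<le> 0" by (simp add: mult_nonneg_nonpos)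
        then show ?thesis by (simp add: ennreal_neg)
      qed
    qed
    show "?f n \<in> borel_measurable \<rho>" for n by (rule measurable_compose[OF _ measurable_ennreal], rule meas_rho) measurable
    show "(\<lambda>n. ?f n s) \<longlonglongrightarrow> indicator {0<..} s" for s
    proof (cases "s > 0")
      case True
      have "norm (exp (- s)) < 1" using True by simp
      then have "(\<lambda>n. exp (- s) ^ n) \<longlonglongrightarrow> 0" by (rule LIMSEQ_power_zero)
      moreover have "exp (- real n * s) = exp (- s) ^ n" for n
        using exp_of_nat_mult[of n "- s"] by simp
      ultimately have "(\<lambda>n. 1 - exp (- real n * s)) \<longlonglongrightarrow> 1 - 0"
        by (intro tendsto_diff tendsto_const) simp
      then have "(\<lambda>n. ?f n s) \<longlonglongrightarrow> ennreal 1" by (intro tendsto_ennrealI) simp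
      then show ?thesis using True by simp
    next
      case False
      then have "1 - exp (- real n * s) \<le> 0" for n by (simp add: mult_nonneg_nonpos)
      then have "?f n s = 0" for n by (simp add: ennreal_neg)
      then show ?thesis using False by simp
    qed
  qed
  note lim = this
  have inf: "integral\<^sup>N \<rho> (\<lambda>s. indicator {0<..} s) = \<infinity>"
    using rho_infinite by (simp add: rho_sets)
  have bnd:  "integral\<^sup>N \<rho> (?f n) \<le> ennreal Z" for n
  proof -
    have "integral\<^sup>N \<rho> (?f n) = ennreal (psi (real n))" using psi_nn[of "real n"] by simp
    also have "\<dots> \<le> ennreal Z" using le[of n] by (rule ennreal_leI)
    finally show ?thesis .
  qed
  have "integral\<^sup>N \<rho> (\<lambda>s. indicator {0<..} s) \<le> ennreal Z"
    by (rule LIMSEQ_le_const2[OF lim]) (use bnd in blast)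
  then have "\<infinity> \<le> ennreal Z" using inf by simp
  then show False by (simp add: top_unique)
qed

lemma psi_at_top: "filterlim psi at_top at_top"
  unfolding filterlim_at_top
proof
  fix Z
  obtain n :: nat where n: "psi (real n) > Z" using psi_unbounded by blast
  show "\<forall>\<^sub>F x in at_top. Z \<le> psi x"
    using eventually_ge_at_top[of "real n"]
  proof eventually_elim
    case (elim x) then show ?case using psi_mono[of "real n" x] n by simp
  qed
qed

lemma psi_lim0: "(\<lambda>n. psi (inverse (real (Suc n)))) \<longlonglongrightarrow> 0"
proof -
  have "(\<lambda>n. \<integral>s. (1 - exp (- inverse (real (Suc n)) * s)) \<partial>\<rho>) \<longlonglongrightarrow> (\<integral>s. 0 \<partial>\<rho>)"
  proof (rule integral_dominated_convergence[where w="\<lambda>s. min s 1"])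
    show "(\<lambda>s. 0::real) \<in> borel_measurable \<rho>" by simp
    show "(\<lambda>s. 1 - exp (- inverse (real (Suc n)) * s)) \<in> borel_measurable \<rho>" for n
      by (rule meas_rho) measurable
    show "integrable \<rho> (\<lambda>s. min s 1)" by (rule int_min)
    show "AE s in \<rho>. (\<lambda>n. 1 - exp (- inverse (real (Suc n)) * s)) \<longlonglongrightarrow> 0"
    proof (intro AE_I2)
      fix s :: real
      have "(\<lambda>n. 1 - exp (- inverse (real (Suc n)) * s)) \<longlonglongrightarrow> 1 - exp (- 0 * s)"
        by (intro tendsto_intros LIMSEQ_inverse_real_of_nat)
      then show "(\<lambda>n. 1 - exp (- inverse (real (Suc n)) * s)) \<longlonglongrightarrow> 0" by simp
    qed
    show "AE s in \<rho>. norm (1 - exp (- inverse (real (Suc n)) * s)) \<le> min s 1" for n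
      using AE_pos
    proof eventually_elim
      case (elim s)
      let ?l = "inverse (real (Suc n))"
      have l0: "0 < ?l" "?l \<le> 1" by (auto simp: field_simps)
      have e1: "exp (- ?l * s) \<le> 1" using elim l0 by simp
      have e2: "1 - ?l * s \<le> exp (- ?l * s)" using exp_ge_add_one_self[of "- ?l * s"] by simp
      have "?l * s \<le> s" using l0 elim by (simp add: mult_left_le_one_le)
      then show ?case using e1 e2 by (simp add: abs_if)
    qed
  qed
  then show ?thesis unfolding psi_def by simp
qed

end


lemma sq_le_exp: fixes x :: real assumes "x \<ge> 0" shows "x^2 / 4 \<le> exp x"
proof -
  have "x^2 / 4 \<le> (1 + x / 2)^2" using assms by (simp add: power2_eq_square field_simps)
  also have "\<dots> \<le> exp x" using exp_ge_one_plus_x_over_n_power_n[where x=x and n=2] assms by simp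
  finally show ?thesis .
qed

context levy begin

definition fb where "fb b l = indicator {0<..} l * (b/2 * tau 1 (l/2) * exp (- b * psi (l/2)))"
definition gg where "gg b l = indicator {0<..} l * (l * exp (- b * psi l) * tau 2 l)"

lemma isCont_tau_half: "l > 0 \<Longrightarrow> k > 0 \<Longrightarrow> isCont (\<lambda>l. tau k (l/2)) l"
  by (rule isCont_o2[where f="\<lambda>l. l/2"]) (auto intro!: DERIV_isCont[OF DERIV_tau])

lemma isCont_psi_half: "l > 0 \<Longrightarrow> isCont (\<lambda>l. psi (l/2)) l"
  by (rule isCont_o2[where f="\<lambda>l. l/2"]) (auto intro!: DERIV_isCont[OF DERIV_psi])

lemma fb_meas: "fb b \<in> borel_measurable borel"
proof -
  have "continuous_on {0<..} (\<lambda>l. b/2 * tau 1 (l/2) * exp (- b * psi (l/2)))"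
    by (intro continuous_at_imp_continuous_on ballI)
       (auto intro!: continuous_intros isCont_tau_half isCont_psi_half)
  then have "(\<lambda>l. indicator {0<..} l *\<^sub>R (b/2 * tau 1 (l/2) * exp (- b * psi (l/2)))) \<in> borel_measurable borel"
    by (intro borel_measurable_continuous_on_indicator) auto
  then show ?thesis unfolding fb_def[abs_def] by simp
qed

lemma gg_meas: "gg b \<in> borel_measurable borel"
proof -
  have "continuous_on {0<..} (\<lambda>l. l * exp (- b * psi l) * tau 2 l)"
    by (intro continuous_at_imp_continuous_on ballI)
       (auto intro!: continuous_intros DERIV_isCont[OF DERIV_psi] DERIV_isCont[OF DERIV_tau])
  then have "(\<lambda>l. indicator {0<..} l *\<^sub>R (l * exp (- b * psi l) * tau 2 l)) \<in> borel_measurable borel"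
    by (intro borel_measurable_continuous_on_indicator) auto
  then show ?thesis unfolding gg_def[abs_def] by simp
qed

lemma gg_nonneg: "gg b l \<ge> 0"
  unfolding gg_def using tau_nonneg[of 2 l] by (auto simp: indicator_def)

lemma FTC_fb: assumes b: "b > 0"
  shows "(\<integral>\<^sup>+ l. ennreal (fb b l) * indicator {1..} l \<partial>lborel) = ennreal (exp (- b * psi (1/2)))"
proof -
  have "(\<integral>\<^sup>+ l. ennreal (fb b l) * indicator {1..} l \<partial>lborel) = 0 - (- exp (- b * psi (1/2)))"
  proof (rule nn_integral_FTC_atLeast[where F="\<lambda>l. - exp (- b * psi (l/2))"])
    show "fb b \<in> borel_measurable borel" by (rule fb_meas)
    fix x :: real assume x: "1 \<le> x"
    have d0: "DERIV (\<lambda>l. l/2) x :> 1/2" by (auto intro!: derivative_eq_intros)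
    have d1: "DERIV (\<lambda>l. psi (l/2)) x :> tau 1 (x/2) * (1/2)"
      using DERIV_chain2[OF DERIV_psi[of "x/2"] d0] x by simp
    have "DERIV (\<lambda>l. - exp (- b * psi (l/2))) x :> - (exp (- b * psi (x/2)) * (- b * (tau 1 (x/2) * (1/2))))"
      by (intro DERIV_minus DERIV_chain2[OF DERIV_exp] DERIV_cmult d1)
    moreover have "- (exp (- b * psi (x/2)) * (- b * (tau 1 (x/2) * (1/2)))) = fb b x"
      using x by (simp add: fb_def)
    ultimately show "DERIV (\<lambda>l. - exp (- b * psi (l/2))) x :> fb b x" by simp
    show "0 \<le> fb b x" using x b tau_nonneg[of 1 "x/2"] by (simp add: fb_def)
  next
    have "filterlim (\<lambda>l::real. (1/2) * l) at_top at_top"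
      by (rule filterlim_tendsto_pos_mult_at_top[OF tendsto_const]) (auto simp: filterlim_ident)
    then have "filterlim (\<lambda>l::real. l/2) at_top at_top" by simp
    then have "filterlim (\<lambda>l. psi (l/2)) at_top at_top"
      by (rule filterlim_compose[OF psi_at_top])
    then have "filterlim (\<lambda>l. (- b) * psi (l/2)) at_bot at_top"
      by (intro filterlim_tendsto_neg_mult_at_bot[OF tendsto_const]) (use b in auto)
    then have "((\<lambda>l. exp ((- b) * psi (l/2))) \<longlongrightarrow> 0) at_top"
      by (rule filterlim_compose[OF exp_at_bot])
    then have "((\<lambda>l. - exp ((- b) * psi (l/2))) \<longlongrightarrow> - 0) at_top"
      by (rule tendsto_minus)
    then show "((\<lambda>l. - exp (- b * psi (l/2))) \<longlongrightarrow> 0) at_top" by simp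
  qed
  then show ?thesis by simp
qed

end


context levy begin

lemma ltau2_le: assumes l: "l > 0" shows "l * tau 2 l \<le> 2 * tau 1 (l/2)"
proof -
  have "l * tau 2 l = (\<integral>s. l * (s^2 * exp (- l * s)) \<partial>\<rho>)" unfolding tau_def by simp
  also have "\<dots> \<le> (\<integral>s. 2 * (s^1 * exp (- (l/2) * s)) \<partial>\<rho>)"
  proof (rule integral_mono_AE)
    show "integrable \<rho> (\<lambda>s. l * (s^2 * exp (- l * s)))" using int_tau[of l 2] l by simp
    show "integrable \<rho> (\<lambda>s. 2 * (s^1 * exp (- (l/2) * s)))" using int_tau[of "l/2" 1] l by simp
    show "AE s in \<rho>. l * (s^2 * exp (- l * s)) \<le> 2 * (s^1 * exp (- (l/2) * s))"
      using AE_pos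
    proof eventually_elim
      case (elim s)
      define E where "E = exp (- (l/2) * s)"
      have E0: "E > 0" unfolding E_def by simp
      have "exp (l * s / 2) * E = 1" unfolding E_def by (simp flip: exp_add)
      have h: "l * s / 2 \<le> exp (l * s / 2)" using exp_ge_add_one_self[of "l * s / 2"] by linarith
      have "l * s * E \<le> 2 * exp (l * s / 2) * E" by (rule mult_right_mono) (use h E0 in linarith)+
      also have "\<dots> = 2" using \<open>exp (l * s / 2) * E = 1\<close> by simp
      finally have lsE: "l * s * E \<le> 2" .
      have ee: "exp (- l * s) = E * E" unfolding E_def by (simp flip: exp_add)
      have "l * (s^2 * exp (- l * s)) = s * (l * s * E) * E" unfolding ee by (simp add: power2_eq_square)
      also have "\<dots> \<le> s * 2 * E" using lsE E0 elim by (intro mult_right_mono mult_left_mono) auto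
      finally show ?case unfolding E_def by simp
    qed
  qed
  also have "\<dots> = 2 * tau 1 (l/2)" unfolding tau_def by simp
  finally show ?thesis .
qed

lemma pt_far: assumes b: "b > 0" and l: "l \<ge> 1" shows "gg b l \<le> 4 / b * fb b l"
proof -
  have e: "exp (- b * psi l) \<le> exp (- b * psi (l/2))"
    using psi_mono[of "l/2" l] l b by simp
  have "gg b l = (l * tau 2 l) * exp (- b * psi l)" using l by (simp add: gg_def)
  also have "\<dots> \<le> (2 * tau 1 (l/2)) * exp (- b * psi (l/2))"
    by (rule mult_mono[OF ltau2_le e]) (use l tau_nonneg[of 1 "l/2"] in auto)
  also have "\<dots> = 4 / b * fb b l" using l b by (simp add: fb_def)
  finally show ?thesis .
qed

lemma pt_large: assumes b: "b \<ge> 1" and l: "l \<ge> 1"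
  shows "gg b l \<le> exp (- (b - 1) * psi 1) * gg 1 l"
proof -
  have "exp (- b * psi l) = exp (- (b - 1) * psi l) * exp (- 1 * psi l)"
    by (simp flip: exp_add add: algebra_simps)
  moreover have "exp (- (b - 1) * psi l) \<le> exp (- (b - 1) * psi 1)"
    using psi_mono[of 1 l] l b by (simp add: mult_left_mono_neg)
  ultimately have "exp (- b * psi l) \<le> exp (- (b - 1) * psi 1) * exp (- 1 * psi l)"
    by (simp add: mult_right_mono)
  then have "(l * tau 2 l) * exp (- b * psi l) \<le> (l * tau 2 l) * (exp (- (b - 1) * psi 1) * exp (- 1 * psi l))"
    using l tau_nonneg[of 2 l] by (intro mult_left_mono) auto
  then show ?thesis using l by (simp add: gg_def mult_ac)
qed

lemma far_int: assumes "b > 0" "0 \<le> c" "\<And>l. l \<ge> 1 \<Longrightarrow> gg b l \<le> c * fb b' l" "b' > 0"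
  shows "(\<integral>\<^sup>+ l. ennreal (gg b l) * indicator {1..} l \<partial>lborel) \<le> ennreal c"
proof -
  have "(\<integral>\<^sup>+ l. ennreal (gg b l) * indicator {1..} l \<partial>lborel) \<le>
      (\<integral>\<^sup>+ l. ennreal c * (ennreal (fb b' l) * indicator {1..} l) \<partial>lborel)"
  proof (rule nn_integral_mono)
    fix l :: real
    show "ennreal (gg b l) * indicator {1..} l \<le> ennreal c * (ennreal (fb b' l) * indicator {1..} l)"
    proof (cases "l \<ge> 1")
      case True
      have "ennreal (gg b l) \<le> ennreal (c * fb b' l)" using assms(3)[OF True] by (rule ennreal_leI)
      also have "\<dots> = ennreal c * ennreal (fb b' l)" using assms(2) by (rule ennreal_mult')
      finally show ?thesis using True by simp
    qed simp
  qed
  also have "\<dots> = ennreal c * (\<integral>\<^sup>+ l. ennreal (fb b' l) * indicator {1..} l \<partial>lborel)"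
    by (rule nn_integral_cmult) (use fb_meas in measurable)
  also have "\<dots> = ennreal c * ennreal (exp (- b' * psi (1/2)))" using FTC_fb[OF assms(4)] by simp
  also have "\<dots> \<le> ennreal c * ennreal 1"
  proof -
    have "exp (- b' * psi (1/2)) \<le> 1" using psi_nonneg[of "1/2"] assms(4) by simp
    then show ?thesis by (intro mult_left_mono ennreal_leI) auto
  qed
  finally show ?thesis by simp
qed

lemma far_b: assumes "b > 0"
  shows "(\<integral>\<^sup>+ l. ennreal (gg b l) * indicator {1..} l \<partial>lborel) \<le> ennreal (4 / b)"
  by (rule far_int[OF assms _ pt_far[OF assms] assms]) (use assms in auto)

lemma far_large: assumes "b \<ge> 1"
  shows "(\<integral>\<^sup>+ l. ennreal (gg b l) * indicator {1..} l \<partial>lborel) \<le> ennreal (4 * exp (- (b - 1) * psi 1))"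
proof (rule far_int[where b'=1])
  fix l :: real assume l: "l \<ge> 1"
  have "gg b l \<le> exp (- (b - 1) * psi 1) * gg 1 l" by (rule pt_large[OF assms l])
  also have "\<dots> \<le> exp (- (b - 1) * psi 1) * (4 / 1 * fb 1 l)"
    by (intro mult_left_mono pt_far l) auto
  finally show "gg b l \<le> 4 * exp (- (b - 1) * psi 1) * fb 1 l" by simp
qed (use assms in auto)

lemma near: assumes b: "b > 0"
  shows "(\<integral>\<^sup>+ l. ennreal (gg b l) * indicator {..<1} l \<partial>lborel) \<le> ennreal (tau 2 0 / (b * psi 1)^2)"
proof -
  define t where "t = b * psi 1"
  have t: "t > 0" unfolding t_def using b psi1_pos by simp
  have "(\<integral>\<^sup>+ l. ennreal (gg b l) * indicator {..<1} l \<partial>lborel) \<le>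
      (\<integral>\<^sup>+ l. ennreal (tau 2 0) * (ennreal (l^1 * exp (- l * t)) * indicator {0<..} l) \<partial>lborel)"
  proof (rule nn_integral_mono)
    fix l :: real
    show "ennreal (gg b l) * indicator {..<1} l \<le> ennreal (tau 2 0) * (ennreal (l^1 * exp (- l * t)) * indicator {0<..} l)"
    proof (cases "0 < l \<and> l < 1")
      case True
      have "exp (- b * psi l) \<le> exp (- l * t)"
        using psi_lower[of l] True b unfolding t_def by (simp add: mult_left_mono)
      then have "l * exp (- b * psi l) * tau 2 l \<le> l * exp (- l * t) * tau 2 0"
        using True tau2_le[of l] tau_nonneg[of 2 l]
        by (intro mult_mono mult_left_mono) auto
      then have "gg b l \<le> tau 2 0 * (l^1 * exp (- l * t))" using True by (simp add: gg_def mult_ac)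
      then have "ennreal (gg b l) \<le> ennreal (tau 2 0 * (l^1 * exp (- l * t)))" by (rule ennreal_leI)
      also have "\<dots> = ennreal (tau 2 0) * ennreal (l^1 * exp (- l * t))" using tau_nonneg[of 2 0] by (rule ennreal_mult')
      finally show ?thesis using True by simp
    next
      case False
      then show ?thesis by (auto simp: gg_def indicator_def)
    qed
  qed
  also have "\<dots> = ennreal (tau 2 0) * (\<integral>\<^sup>+ l. ennreal (l^1 * exp (- l * t)) * indicator {0<..} l \<partial>lborel)"
    by (rule nn_integral_cmult) measurable
  also have "\<dots> = ennreal (tau 2 0) * ennreal (fact 1 / t^(1+1))" using nn_integral_pow_exp[OF t, of 1] by simp
  also have "\<dots> = ennreal (tau 2 0 / (b * psi 1)^2)"
    using tau_nonneg[of 2 0] t unfolding t_def by (simp add: ennreal_mult[symmetric] power2_eq_square)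
  finally show ?thesis .
qed

end


context levy begin

lemma J_split: "(\<integral>\<^sup>+ l. ennreal (gg b l) \<partial>lborel) =
   (\<integral>\<^sup>+ l. ennreal (gg b l) * indicator {..<1} l \<partial>lborel) + (\<integral>\<^sup>+ l. ennreal (gg b l) * indicator {1..} l \<partial>lborel)"
proof -
  have "(\<integral>\<^sup>+ l. ennreal (gg b l) \<partial>lborel) =
     (\<integral>\<^sup>+ l. ennreal (gg b l) * indicator {..<1} l + ennreal (gg b l) * indicator {1..} l \<partial>lborel)"
    by (intro nn_integral_cong) (auto simp: indicator_def)
  also have "\<dots> = (\<integral>\<^sup>+ l. ennreal (gg b l) * indicator {..<1} l \<partial>lborel) + (\<integral>\<^sup>+ l. ennreal (gg b l) * indicator {1..} l \<partial>lborel)"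
  proof (rule nn_integral_add)
    have [measurable]: "gg b \<in> borel_measurable borel" by (rule gg_meas)
    show "(\<lambda>l. ennreal (gg b l) * indicator {..<1} l) \<in> borel_measurable lborel" by measurable
    show "(\<lambda>l. ennreal (gg b l) * indicator {1..} l) \<in> borel_measurable lborel" by measurable
  qed
  finally show ?thesis .
qed

lemma J_fin: assumes "b > 0" shows "(\<integral>\<^sup>+ l. ennreal (gg b l) \<partial>lborel) < \<infinity>"
proof -
  have "(\<integral>\<^sup>+ l. ennreal (gg b l) \<partial>lborel) \<le> ennreal (tau 2 0 / (b * psi 1)^2) + ennreal (4 / b)"
    unfolding J_split by (intro add_mono near far_b assms)
  also have "\<dots> < \<infinity>" by simp
  finally show ?thesis .
qed

lemma gg_int: assumes "b > 0" shows "integrable lborel (gg b)"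
proof (rule integrableI_nonneg)
  have [measurable]: "gg b \<in> borel_measurable borel" by (rule gg_meas)
  show "gg b \<in> borel_measurable lborel" by measurable
  show "AE x in lborel. 0 \<le> gg b x" by (simp add: gg_nonneg)
  show "(\<integral>\<^sup>+ x. ennreal (gg b x) \<partial>lborel) < \<infinity>" by (rule J_fin[OF assms])
qed

lemma J_eq: assumes "b > 0" shows "(\<integral>\<^sup>+ l. ennreal (gg b l) \<partial>lborel) = ennreal (integral\<^sup>L lborel (gg b))"
  by (rule nn_integral_eq_integral[OF gg_int[OF assms]]) (simp add: gg_nonneg)

lemma Ia_integrand_eq: "Ia_integrand \<rho> b l = l * exp (- b * psi l) * tau 2 l"
  by (simp add: Ia_integrand_def psi_def tau_def)

lemma ind_Ia: "(\<lambda>l. indicator {0<..} l *\<^sub>R Ia_integrand \<rho> b l) = gg b"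
  by (simp add: fun_eq_iff Ia_integrand_eq gg_def)

lemma ind_Ia2: "(\<lambda>l. indicator {0<..} l * Ia_integrand \<rho> b l) = gg b"
  by (simp add: fun_eq_iff Ia_integrand_eq gg_def)

lemma set_int: assumes "b > 0" shows "set_integrable lborel {0<..} (Ia_integrand \<rho> b)"
  unfolding set_integrable_def ind_Ia by (rule gg_int[OF assms])

lemma Ia_eq: "Ia \<rho> b = b * integral\<^sup>L lborel (gg b)"
  by (simp add: Ia_def set_lebesgue_integral_def ind_Ia2)

lemma Ia_bigo: "(\<lambda>b. Ia \<rho> b) \<in> O[at_top](\<lambda>b. 1 / b)"
proof (rule bigoI[where c="(tau 2 0 + 64) / (psi 1)^2"])
  define c where "c = psi 1"
  have c: "c > 0" unfolding c_def by (rule psi1_pos)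
  show "\<forall>\<^sub>F b in at_top. norm (Ia \<rho> b) \<le> (tau 2 0 + 64) / (psi 1)^2 * norm (1 / b)"
    using eventually_ge_at_top[of "2::real"]
  proof eventually_elim
    case (elim b)
    have b0: "b > 0" using elim by simp
    have "ennreal (integral\<^sup>L lborel (gg b)) \<le> ennreal (tau 2 0 / (b * c)^2) + ennreal (4 * exp (- (b - 1) * c))"
      unfolding J_eq[OF b0, symmetric] J_split c_def by (intro add_mono near far_large) (use elim in auto)
    also have "\<dots> = ennreal (tau 2 0 / (b * c)^2 + 4 * exp (- (b - 1) * c))"
      by (rule ennreal_plus[symmetric]) (use tau_nonneg[of 2 0] in auto)
    finally have I0: "ennreal (integral\<^sup>L lborel (gg b)) \<le> ennreal (tau 2 0 / (b * c)^2 + 4 * exp (- (b - 1) * c))" .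
    have ynn: "0 \<le> tau 2 0 / (b * c)^2 + 4 * exp (- (b - 1) * c)" using tau_nonneg[of 2 0] by simp
    have I1: "integral\<^sup>L lborel (gg b) \<le> tau 2 0 / (b * c)^2 + 4 * exp (- (b - 1) * c)"
      using I0 ennreal_le_iff[OF ynn] by blast
    have "(b * c)^2 / 16 \<le> ((b - 1) * c)^2 / 4"
    proof -
      have h0: "0 \<le> (b/2 - 1) * c" using elim c by simp
      have h1: "(b - 1) * c - b * c / 2 = (b/2 - 1) * c" by (simp add: algebra_simps)
      have "b * c / 2 \<le> (b - 1) * c" using h0 h1 by linarith
      then have "(b * c / 2)^2 \<le> ((b - 1) * c)^2" using c b0 by (intro power_mono) auto
      then show ?thesis by (simp add: power_divide)
    qed
    also have "\<dots> \<le> exp ((b - 1) * c)" using elim c by (intro sq_le_exp) auto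
    finally have E: "(b * c)^2 / 16 \<le> exp ((b - 1) * c)" .
    have "exp (- (b - 1) * c) = exp (- ((b - 1) * c))" by (simp add: algebra_simps)
    also have "\<dots> = 1 / exp ((b - 1) * c)" by (rule exp_minus')
    also have "\<dots> \<le> 1 / ((b * c)^2 / 16)" using E b0 c by (intro divide_left_mono) auto
    finally have E2: "exp (- (b - 1) * c) \<le> 16 / (b * c)^2" by simp
    have "Ia \<rho> b = b * integral\<^sup>L lborel (gg b)" by (rule Ia_eq)
    also have "\<dots> \<le> b * (tau 2 0 / (b * c)^2 + 4 * (16 / (b * c)^2))"
      using I1 E2 b0 by (intro mult_left_mono) auto
    also have "\<dots> = (tau 2 0 + 64) / c^2 * (1 / b)" using b0 c by (simp add: field_simps power2_eq_square)
    finally have up: "Ia \<rho> b \<le> (tau 2 0 + 64) / c^2 * (1 / b)" .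
    have "0 \<le> Ia \<rho> b" unfolding Ia_eq using b0 gg_nonneg by (simp add: integral_nonneg)
    then show ?case using up b0 unfolding c_def by simp
  qed
qed

end


lemma neg_exp_meas: "neg_exp_enn \<in> borel_measurable borel"
proof -
  have "neg_exp_enn = (\<lambda>L. indicator {..<\<infinity>} L * exp (- enn2real L))"
    by (auto simp: fun_eq_iff neg_exp_enn_def indicator_def top.not_eq_extremum)
  also have "\<dots> \<in> borel_measurable borel" by measurable
  finally show ?thesis .
qed

locale crm = levy \<rho> for \<rho> +
  fixes H :: "'x::polish_space measure" and a :: real and M :: "'w measure" and \<mu> :: "'w \<Rightarrow> 'x measure"
  assumes H_prob: "prob_space H" and H_sets: "sets H = sets borel"
    and a_pos: "a > 0"
    and M_prob: "prob_space M"
    and mu_sets: "\<And>w. w \<in> space M \<Longrightarrow> sets (\<mu> w) = sets borel"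
    and mu_meas: "\<And>A. A \<in> sets borel \<Longrightarrow> (\<lambda>w. emeasure (\<mu> w) A) \<in> borel_measurable M"
    and mu_laplace: "\<And>(h :: 'x \<Rightarrow> real) A. h \<in> borel_measurable borel \<Longrightarrow> (\<forall>x. h x \<ge> 0)
        \<Longrightarrow> bounded (range h) \<Longrightarrow> A \<in> sets borel \<Longrightarrow>
        prob_space.expectation M (\<lambda>w. neg_exp_enn (\<integral>\<^sup>+ x. ennreal (indicator A x * h x) \<partial>(\<mu> w)))
        = exp (- a * (\<integral>x. indicator A x * (\<integral>s. 1 - exp (- s * h x) \<partial>\<rho>) \<partial>H))"
begin

sublocale M: prob_space M by (rule M_prob)
sublocale H: prob_space H by (rule H_prob)

definition Tn where "Tn w = emeasure (\<mu> w) UNIV"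
definition T where "T w = enn2real (Tn w)"
definition Y where "Y A w = enn2real (emeasure (\<mu> w) A)"
definition Fh where "Fh A l u = exp (- a * (psi l + measure H A * (psi (l + u) - psi l)))"

lemma space_mu: "w \<in> space M \<Longrightarrow> space (\<mu> w) = UNIV"
  using sets_eq_imp_space_eq[OF mu_sets] by simp

lemma Tn_meas[measurable]: "Tn \<in> borel_measurable M"
  unfolding Tn_def[abs_def] by (rule mu_meas) simp

lemma T_meas[measurable]: "T \<in> borel_measurable M"
  unfolding T_def[abs_def] by measurable

lemma Y_meas: "A \<in> sets borel \<Longrightarrow> Y A \<in> borel_measurable M"
  unfolding Y_def[abs_def] by (intro borel_measurable_enn2real mu_meas)

lemma Y_UNIV: "Y UNIV = T"
  by (simp add: fun_eq_iff Y_def T_def Tn_def)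

lemma nn_form:
  assumes w: "w \<in> space M" and A: "A \<in> sets borel" and l: "l \<ge> 0" and u: "u \<ge> 0"
  shows "(\<integral>\<^sup>+ x. ennreal (indicator UNIV x * (l + u * indicator A x)) \<partial>\<mu> w) = ennreal l * Tn w + ennreal u * emeasure (\<mu> w) A"
proof -
  have As: "A \<in> sets (\<mu> w)" using mu_sets[OF w] A by simp
  have "(\<integral>\<^sup>+ x. ennreal (indicator UNIV x * (l + u * indicator A x)) \<partial>\<mu> w) =
      (\<integral>\<^sup>+ x. ennreal l + ennreal u * indicator A x \<partial>\<mu> w)"
    using l u by (intro nn_integral_cong) (auto simp: indicator_def)
  also have "\<dots> = (\<integral>\<^sup>+ x. ennreal l \<partial>\<mu> w) + (\<integral>\<^sup>+ x. ennreal u * indicator A x \<partial>\<mu> w)"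
    by (rule nn_integral_add) (use As in auto)
  also have "\<dots> = ennreal l * Tn w + ennreal u * emeasure (\<mu> w) A"
    using As space_mu[OF w] by (simp add: Tn_def nn_integral_cmult_indicator)
  finally show ?thesis .
qed

lemma inner_H:
  assumes A: "A \<in> sets borel" and l: "l \<ge> 0" and u: "u \<ge> 0"
  shows "(\<integral>x. indicator UNIV x * (\<integral>s. 1 - exp (- s * (l + u * indicator A x)) \<partial>\<rho>) \<partial>H)
       = psi l + measure H A * (psi (l + u) - psi l)"
proof -
  have "(\<lambda>x. indicator UNIV x * (\<integral>s. 1 - exp (- s * (l + u * indicator A x)) \<partial>\<rho>))
      = (\<lambda>x. psi l + indicator A x * (psi (l + u) - psi l))"
  proof -
    have c1: "(\<integral>s. 1 - exp (- (s * c)) \<partial>\<rho>) = psi c" for c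
      unfolding psi_def by (intro Bochner_Integration.integral_cong) (simp_all add: mult.commute)
    show ?thesis by (auto simp: fun_eq_iff indicator_def c1)
  qed
  then have "(\<integral>x. indicator UNIV x * (\<integral>s. 1 - exp (- s * (l + u * indicator A x)) \<partial>\<rho>) \<partial>H)
      = (\<integral>x. psi l + indicator A x * (psi (l + u) - psi l) \<partial>H)" by simp
  also have "\<dots> = (\<integral>x. psi l \<partial>H) + (\<integral>x. indicator A x * (psi (l + u) - psi l) \<partial>H)"
  proof (rule Bochner_Integration.integral_add)
    have iA: "integrable H (indicator A :: 'x \<Rightarrow> real)"
      by (rule integrable_real_indicator) (use A H_sets in \<open>auto simp: less_top[symmetric]\<close>)
    then show "integrable H (\<lambda>x. indicator A x * (psi (l + u) - psi l))" by (rule integrable_mult_left)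
  qed simp
  also have "\<dots> = psi l + measure H A * (psi (l + u) - psi l)"
    using A H_sets H.prob_space by (simp add: sets_eq_imp_space_eq[OF H_sets])
  finally show ?thesis .
qed

lemma laplace_enn:
  assumes A: "A \<in> sets borel" and l: "l \<ge> 0" and u: "u \<ge> 0"
  shows "M.expectation (\<lambda>w. neg_exp_enn (ennreal l * Tn w + ennreal u * emeasure (\<mu> w) A)) = Fh A l u"
proof -
  have "M.expectation (\<lambda>w. neg_exp_enn (\<integral>\<^sup>+ x. ennreal (indicator UNIV x * (l + u * indicator A x)) \<partial>(\<mu> w)))
        = exp (- a * (\<integral>x. indicator UNIV x * (\<integral>s. 1 - exp (- s * (l + u * indicator A x)) \<partial>\<rho>) \<partial>H))"
  proof (rule mu_laplace)
    show "(\<lambda>x. l + u * indicator A x) \<in> borel_measurable borel" using A by measurable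
    show "\<forall>x. 0 \<le> l + u * indicator A x" using l u by (simp add: indicator_def)
    have "range (\<lambda>x. l + u * indicator A x) \<subseteq> {l, l + u}" by (auto simp: indicator_def)
    moreover have fb: "bounded {l, l + u}" by (rule finite_imp_bounded) simp
    ultimately show "bounded (range (\<lambda>x. l + u * indicator A x))"
      using bounded_subset by blast
  qed simp
  also have "\<dots> = Fh A l u" unfolding inner_H[OF A l u] Fh_def ..
  finally have eq: "M.expectation (\<lambda>w. neg_exp_enn (\<integral>\<^sup>+ x. ennreal (indicator UNIV x * (l + u * indicator A x)) \<partial>(\<mu> w))) = Fh A l u" .
  have "M.expectation (\<lambda>w. neg_exp_enn (ennreal l * Tn w + ennreal u * emeasure (\<mu> w) A)) =
      M.expectation (\<lambda>w. neg_exp_enn (\<integral>\<^sup>+ x. ennreal (indicator UNIV x * (l + u * indicator A x)) \<partial>(\<mu> w)))"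
    by (intro Bochner_Integration.integral_cong refl arg_cong[where f=neg_exp_enn] nn_form[symmetric] A l u)
  then show ?thesis using eq by simp
qed

end


lemma neg_exp_bounds: "0 \<le> neg_exp_enn L" "neg_exp_enn L \<le> 1"
  by (auto simp: neg_exp_enn_def)

lemma norm_neg_exp: "norm (neg_exp_enn L) \<le> 1"
  using neg_exp_bounds[of L] by simp

lemma neg_exp_ennreal: "x \<ge> 0 \<Longrightarrow> neg_exp_enn (ennreal x) = exp (- x)"
  by (simp add: neg_exp_enn_def)

context crm begin

lemma lap0: assumes "l \<ge> 0" shows "M.expectation (\<lambda>w. neg_exp_enn (ennreal l * Tn w)) = exp (- a * psi l)"
  using laplace_enn[of UNIV l 0] assms by (simp add: Fh_def Tn_def)

lemma E_fin: assumes w: "w \<in> space M" "Tn w < \<infinity>" and A: "A \<in> sets borel"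
  shows "emeasure (\<mu> w) A < \<infinity>" "Y A w \<le> T w" "emeasure (\<mu> w) A = ennreal (Y A w)" "Tn w = ennreal (T w)"
proof -
  have le: "emeasure (\<mu> w) A \<le> Tn w"
    unfolding Tn_def by (intro emeasure_mono) (use mu_sets[OF w(1)] A in auto)
  then show f: "emeasure (\<mu> w) A < \<infinity>" using w(2) by (simp add: le_less_trans)
  show "Y A w \<le> T w" unfolding Y_def T_def using le w(2) by (simp add: enn2real_mono)
  show "emeasure (\<mu> w) A = ennreal (Y A w)" unfolding Y_def using f by simp
  show "Tn w = ennreal (T w)" unfolding T_def using w(2) by simp
qed

lemma Tn_eq: "Tn w < \<infinity> \<Longrightarrow> Tn w = ennreal (T w)"
  unfolding T_def by simp

lemma T_nonneg: "T w \<ge> 0" unfolding T_def by simp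

lemma mult_Tn: "Tn w < \<infinity> \<Longrightarrow> c \<ge> 0 \<Longrightarrow> ennreal c * Tn w = ennreal (c * T w)"
  by (subst Tn_eq) (auto simp: ennreal_mult T_nonneg)

lemma AE_fin: "AE w in M. Tn w < \<infinity>"
proof -
  let ?g = "\<lambda>(n::nat) w. neg_exp_enn (ennreal (inverse (real (Suc n))) * Tn w)"
  let ?L = "\<lambda>w. indicator {w \<in> space M. Tn w < \<infinity>} w :: real"
  have "(\<lambda>n. M.expectation (?g n)) \<longlonglongrightarrow> M.expectation ?L"
  proof (rule integral_dominated_convergence[where w="\<lambda>_. 1"])
    show "?L \<in> borel_measurable M" by measurable
    show "?g n \<in> borel_measurable M" for n
      by (rule measurable_compose[OF _ neg_exp_meas]) measurable
    show "integrable M (\<lambda>_. 1::real)" by simp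
    show "AE w in M. norm (?g n w) \<le> 1" for n
      by (intro AE_I2) (rule norm_neg_exp)
    show "AE w in M. (\<lambda>n. ?g n w) \<longlonglongrightarrow> ?L w"
    proof (intro AE_I2)
      fix w assume w: "w \<in> space M"
      show "(\<lambda>n. ?g n w) \<longlonglongrightarrow> ?L w"
      proof (cases "Tn w < \<infinity>")
        case True
        have "?g n w = exp (- (inverse (real (Suc n)) * T w))" for n
          using mult_Tn[OF True, of "inverse (real (Suc n))"] T_nonneg[of w]
          by (simp add: neg_exp_ennreal)
        moreover have "(\<lambda>n. exp (- (inverse (real (Suc n)) * T w))) \<longlonglongrightarrow> exp (- (0 * T w))"
          by (intro tendsto_intros LIMSEQ_inverse_real_of_nat)
        ultimately show ?thesis using True w by simp
      next
        case False
        then have "Tn w = \<infinity>" by (simp add: less_top[symmetric])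
        then have "?g n w = 0" for n by (simp add: ennreal_mult_top neg_exp_enn_def)
        then show ?thesis using False by simp
      qed
    qed
  qed
  moreover have "(\<lambda>n. M.expectation (?g n)) \<longlonglongrightarrow> 1"
  proof -
    have "(\<lambda>n. exp (- a * psi (inverse (real (Suc n))))) \<longlonglongrightarrow> exp (- a * 0)"
      by (intro tendsto_intros psi_lim0)
    then show ?thesis by (subst lap0) auto
  qed
  ultimately have "M.expectation ?L = 1" using LIMSEQ_unique by blast
  then have "M.prob {w \<in> space M. Tn w < \<infinity>} = 1" by simp
  from M.AE_prob_1[OF this] show ?thesis by simp
qed

lemma AE_nz: "AE w in M. Tn w \<noteq> 0"
proof -
  let ?g = "\<lambda>(n::nat) w. neg_exp_enn (ennreal (real (Suc n)) * Tn w)"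
  let ?S = "{w \<in> space M. Tn w = 0}"
  let ?L = "\<lambda>w. indicator ?S w :: real"
  have "(\<lambda>n. M.expectation (?g n)) \<longlonglongrightarrow> M.expectation ?L"
  proof (rule integral_dominated_convergence[where w="\<lambda>_. 1"])
    show "?L \<in> borel_measurable M" by measurable
    show "?g n \<in> borel_measurable M" for n
      by (rule measurable_compose[OF _ neg_exp_meas]) measurable
    show "integrable M (\<lambda>_. 1::real)" by simp
    show "AE w in M. norm (?g n w) \<le> 1" for n
      by (intro AE_I2) (rule norm_neg_exp)
    show "AE w in M. (\<lambda>n. ?g n w) \<longlonglongrightarrow> ?L w"
    proof (intro AE_I2)
      fix w assume w: "w \<in> space M"
      show "(\<lambda>n. ?g n w) \<longlonglongrightarrow> ?L w"
      proof (cases "Tn w < \<infinity>")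
        case True
        have g: "?g n w = exp (- T w) ^ Suc n" for n
        proof -
          have "?g n w = exp (- (real (Suc n) * T w))"
            using mult_Tn[OF True, of "real (Suc n)"] T_nonneg[of w] by (simp add: neg_exp_ennreal)
          also have "\<dots> = exp (real (Suc n) * (- T w))" by simp
          also have "\<dots> = exp (- T w) ^ Suc n" by (rule exp_of_nat_mult)
          finally show ?thesis .
        qed
        show ?thesis
        proof (cases "Tn w = 0")
          case True
          then have "T w = 0" by (simp add: T_def)
          then show ?thesis unfolding g using True w by simp
        next
          case False
          have "T w \<noteq> 0" using False Tn_eq[OF True] by auto
          moreover have "T w \<ge> 0" by (simp add: T_def)
          ultimately have "T w > 0" by simp
          then have "norm (exp (- T w)) < 1" by simp
          then have "(\<lambda>n. exp (- T w) ^ n) \<longlonglongrightarrow> 0" by (rule LIMSEQ_power_zero)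
          then have "(\<lambda>n. exp (- T w) ^ Suc n) \<longlonglongrightarrow> 0" by (rule LIMSEQ_Suc)
          then show ?thesis unfolding g using False by simp
        qed
      next
        case False
        then have "Tn w = \<infinity>" by (simp add: less_top[symmetric])
        then have "?g n w = 0" for n by (simp add: ennreal_mult_top neg_exp_enn_def)
        then show ?thesis using \<open>Tn w = \<infinity>\<close> by simp
      qed
    qed
  qed
  moreover have "(\<lambda>n. M.expectation (?g n)) \<longlonglongrightarrow> 0"
  proof -
    have "filterlim (\<lambda>n. psi (real n)) at_top sequentially"
      by (rule filterlim_compose[OF psi_at_top filterlim_real_sequentially])
    then have "filterlim (\<lambda>n. psi (real (Suc n))) at_top sequentially"
      by (rule filterlim_sequentially_Suc[THEN iffD2])
    then have "filterlim (\<lambda>n. (- a) * psi (real (Suc n))) at_bot sequentially"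
      by (intro filterlim_tendsto_neg_mult_at_bot[OF tendsto_const]) (use a_pos in auto)
    then have "(\<lambda>n. exp ((- a) * psi (real (Suc n)))) \<longlonglongrightarrow> 0"
      by (rule filterlim_compose[OF exp_at_bot])
    then show ?thesis by (subst lap0) auto
  qed
  ultimately have "M.expectation ?L = 0" using LIMSEQ_unique by blast
  then have "M.prob ?S = 0" by simp
  then have "?S \<in> null_sets M" by (simp add: M.emeasure_eq_measure null_sets_def)
  then show ?thesis by (rule AE_I') auto
qed

lemma laplace_real:
  assumes A: "A \<in> sets borel" and l: "l \<ge> 0" and u: "u \<ge> 0"
  shows "M.expectation (\<lambda>w. exp (- (l * T w + u * Y A w))) = Fh A l u"
proof -
  have [measurable]: "Y A \<in> borel_measurable M" using A by (rule Y_meas)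
  have [measurable]: "(\<lambda>w. emeasure (\<mu> w) A) \<in> borel_measurable M" using A by (rule mu_meas)
  have "M.expectation (\<lambda>w. exp (- (l * T w + u * Y A w))) =
      M.expectation (\<lambda>w. neg_exp_enn (ennreal l * Tn w + ennreal u * emeasure (\<mu> w) A))"
  proof (rule integral_cong_AE)
    show "(\<lambda>w. exp (- (l * T w + u * Y A w))) \<in> borel_measurable M" by measurable
    show "(\<lambda>w. neg_exp_enn (ennreal l * Tn w + ennreal u * emeasure (\<mu> w) A)) \<in> borel_measurable M"
      by (rule measurable_compose[OF _ neg_exp_meas]) measurable
    show "AE w in M. exp (- (l * T w + u * Y A w)) = neg_exp_enn (ennreal l * Tn w + ennreal u * emeasure (\<mu> w) A)"
      using AE_fin AE_space
    proof eventually_elim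
      case (elim w)
      have e1: "emeasure (\<mu> w) A = ennreal (Y A w)" by (rule E_fin(3)[OF elim(2) elim(1) A])
      have e2: "Tn w = ennreal (T w)" by (rule Tn_eq[OF elim(1)])
      have Yn: "Y A w \<ge> 0" by (simp add: Y_def)
      have "ennreal l * Tn w + ennreal u * emeasure (\<mu> w) A = ennreal l * ennreal (T w) + ennreal u * ennreal (Y A w)"
        by (simp only: e1 e2)
      also have "\<dots> = ennreal (l * T w) + ennreal (u * Y A w)"
        using l u Yn T_nonneg[of w] by (simp add: ennreal_mult)
      also have "\<dots> = ennreal (l * T w + u * Y A w)"
        by (rule ennreal_plus[symmetric]) (use l u Yn T_nonneg[of w] in simp_all)
      finally have eq: "ennreal l * Tn w + ennreal u * emeasure (\<mu> w) A = ennreal (l * T w + u * Y A w)" .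
      have nn: "0 \<le> l * T w + u * Y A w" using l u Yn T_nonneg[of w] by simp
      show ?case unfolding eq neg_exp_ennreal[OF nn] ..
    qed
  qed
  then show ?thesis using laplace_enn[OF A l u] by simp
qed

end


lemma dq_mono:
  fixes u v z :: real assumes "0 < u" "u \<le> v" "0 \<le> z"
  shows "(1 - exp (- v * z)) / v \<le> (1 - exp (- u * z)) / u"
proof -
  define t where "t = u / v"
  have t: "0 \<le> t" "t \<le> 1" using assms unfolding t_def by auto
  have c: "exp ((1 - t) *\<^sub>R 0 + t *\<^sub>R (- v * z)) \<le> (1 - t) * exp 0 + t * exp (- v * z)"
    by (rule convex_onD[OF exp_convex]) (use t in auto)
  have e: "(1 - t) *\<^sub>R (0::real) + t *\<^sub>R (- v * z) = - u * z" unfolding t_def using assms by simp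
  from c have "exp (- u * z) \<le> 1 - t + t * exp (- v * z)" unfolding e by simp
  then have "t * (1 - exp (- v * z)) \<le> 1 - exp (- u * z)" by (simp add: algebra_simps)
  then have "u * (1 - exp (- v * z)) \<le> v * (1 - exp (- u * z))"
    unfolding t_def using assms by (simp add: field_simps)
  then show ?thesis using assms by (simp add: field_simps)
qed

lemma dq_lim: fixes z :: real
  shows "(\<lambda>n. (1 - exp (- inverse (real (Suc n)) * z)) / inverse (real (Suc n))) \<longlonglongrightarrow> z"
proof -
  have d: "DERIV (\<lambda>v. 1 - exp (- v * z)) 0 :> z" by (auto intro!: derivative_eq_intros)
  then have "((\<lambda>v. ((1 - exp (- v * z)) - (1 - exp (- 0 * z))) / (v - 0)) \<longlongrightarrow> z) (at 0)"
    unfolding has_field_derivative_iff .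
  then have L: "((\<lambda>v. (1 - exp (- v * z)) / v) \<longlongrightarrow> z) (at 0)" by simp
  have "filterlim (\<lambda>n. inverse (real (Suc n))) (at 0) sequentially"
    by (rule filterlim_atI[OF LIMSEQ_inverse_real_of_nat]) auto
  from filterlim_compose[OF L this] show ?thesis .
qed

lemma deriv_seq:
  assumes "DERIV \<Phi> 0 :> - D"
  shows "(\<lambda>n. (\<Phi> 0 - \<Phi> (inverse (real (Suc n)))) / inverse (real (Suc n))) \<longlonglongrightarrow> D"
proof -
  have "((\<lambda>v. (\<Phi> v - \<Phi> 0) / (v - 0)) \<longlongrightarrow> - D) (at 0)" using assms unfolding has_field_derivative_iff .
  then have L: "((\<lambda>v. - ((\<Phi> v - \<Phi> 0) / v)) \<longlongrightarrow> - (- D)) (at 0)" by (intro tendsto_minus) simp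
  have "filterlim (\<lambda>n. inverse (real (Suc n))) (at 0) sequentially"
    by (rule filterlim_atI[OF LIMSEQ_inverse_real_of_nat]) auto
  from filterlim_compose[OF L this] show ?thesis by (simp add: field_simps minus_divide_left)
qed

lemma dq_lemma:
  fixes Z W :: "'w \<Rightarrow> real"
  assumes Zm[measurable]: "Z \<in> borel_measurable M" and Wm[measurable]: "W \<in> borel_measurable M"
    and Zn: "\<And>w. Z w \<ge> 0" and Wn: "\<And>w. W w \<ge> 0"
    and iW: "integrable M W"
    and Phi: "\<And>v. v \<ge> 0 \<Longrightarrow> (\<integral>w. W w * exp (- v * Z w) \<partial>M) = \<Phi> v"
    and D: "DERIV \<Phi> 0 :> - D"
  shows "(\<integral>\<^sup>+ w. ennreal (Z w * W w) \<partial>M) = ennreal D"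
proof -
  let ?v = "\<lambda>n. inverse (real (Suc n))"
  let ?fr = "\<lambda>n w. (1 - exp (- ?v n * Z w)) / ?v n * W w"
  have iWe: "integrable M (\<lambda>w. W w * exp (- v * Z w))" if "v \<ge> 0" for v
  proof (rule Bochner_Integration.integrable_bound[OF iW])
    show "(\<lambda>w. W w * exp (- v * Z w)) \<in> borel_measurable M" by measurable
    show "AE w in M. norm (W w * exp (- v * Z w)) \<le> norm (W w)"
    proof (intro AE_I2)
      fix w
      have "exp (- v * Z w) \<le> 1" using that Zn[of w] by (simp add: mult_nonneg_nonneg)
      then have "W w * exp (- v * Z w) \<le> W w * 1" using Wn[of w] by (intro mult_left_mono) auto
      then show "norm (W w * exp (- v * Z w)) \<le> norm (W w)" using Wn[of w] by simp
    qed
  qed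
  have fr_nn: "?fr n w \<ge> 0" for n w
    using Zn[of w] Wn[of w] by (simp add: mult_nonneg_nonneg)
  have "(\<lambda>n. \<integral>\<^sup>+ w. ennreal (?fr n w) \<partial>M) \<longlonglongrightarrow> (\<integral>\<^sup>+ w. ennreal (Z w * W w) \<partial>M)"
  proof (rule nn_integral_LIMSEQ)
    show "incseq (\<lambda>n w. ennreal (?fr n w))"
    proof (intro incseq_SucI le_funI ennreal_leI)
      fix n w
      have "(1 - exp (- ?v n * Z w)) / ?v n \<le> (1 - exp (- ?v (Suc n) * Z w)) / ?v (Suc n)"
        by (rule dq_mono) (auto simp: Zn field_simps)
      then show "?fr n w \<le> ?fr (Suc n) w" using Wn[of w] by (intro mult_right_mono) auto
    qed
    show "(\<lambda>w. ennreal (?fr n w)) \<in> borel_measurable M" for n by measurable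
    show "(\<lambda>n. ennreal (?fr n w)) \<longlonglongrightarrow> ennreal (Z w * W w)" for w
      by (intro tendsto_ennrealI tendsto_mult tendsto_const dq_lim)
  qed
  moreover have "(\<lambda>n. \<integral>\<^sup>+ w. ennreal (?fr n w) \<partial>M) \<longlonglongrightarrow> ennreal D"
  proof -
    have eq: "(\<integral>\<^sup>+ w. ennreal (?fr n w) \<partial>M) = ennreal ((\<Phi> 0 - \<Phi> (?v n)) / ?v n)" for n
    proof -
      have fr_eq: "?fr n = (\<lambda>w. (W w * exp (- 0 * Z w) - W w * exp (- ?v n * Z w)) / ?v n)"
        by (simp add: fun_eq_iff field_simps)
      have ifr: "integrable M (?fr n)" unfolding fr_eq
        by (intro integrable_divide Bochner_Integration.integrable_diff iWe) auto
      have "(\<integral>\<^sup>+ w. ennreal (?fr n w) \<partial>M) = ennreal (\<integral>w. ?fr n w \<partial>M)"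
        by (rule nn_integral_eq_integral[OF ifr]) (intro AE_I2 fr_nn)
      also have "(\<integral>w. ?fr n w \<partial>M) = (\<Phi> 0 - \<Phi> (?v n)) / ?v n"
      proof -
        have i0: "integrable M (\<lambda>w. W w * exp (- 0 * Z w))" by (rule iWe) simp
        have i1: "integrable M (\<lambda>w. W w * exp (- ?v n * Z w))" by (rule iWe) simp
        have p0: "(\<integral>w. W w * exp (- 0 * Z w) \<partial>M) = \<Phi> 0" by (rule Phi) simp
        have p1: "(\<integral>w. W w * exp (- ?v n * Z w) \<partial>M) = \<Phi> (?v n)" by (rule Phi) simp
        have "(\<integral>w. ?fr n w \<partial>M) = (\<integral>w. W w * exp (- 0 * Z w) - W w * exp (- ?v n * Z w) \<partial>M) / ?v n"
          unfolding fr_eq by (rule integral_divide_zero)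
        also have "\<dots> = ((\<integral>w. W w * exp (- 0 * Z w) \<partial>M) - (\<integral>w. W w * exp (- ?v n * Z w) \<partial>M)) / ?v n"
          by (subst Bochner_Integration.integral_diff[OF i0 i1]) (rule refl)
        finally show ?thesis unfolding p0 p1 .
      qed
      finally show ?thesis .
    qed
    show ?thesis unfolding eq by (intro tendsto_ennrealI deriv_seq D)
  qed
  ultimately show ?thesis using LIMSEQ_unique by blast
qed


context crm begin

lemma nn_to_real:
  fixes f :: "'w \<Rightarrow> real"
  assumes [measurable]: "f \<in> borel_measurable M" and nn: "\<And>w. f w \<ge> 0"
    and eq: "(\<integral>\<^sup>+ w. ennreal (f w) \<partial>M) = ennreal c" and c: "c \<ge> 0"
  shows "integrable M f" "(\<integral>w. f w \<partial>M) = c"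
proof -
  show i: "integrable M f"
    by (rule integrableI_nonneg) (use nn eq in auto)
  have "ennreal (\<integral>w. f w \<partial>M) = ennreal c"
    using nn_integral_eq_integral[OF i] nn eq by simp
  moreover have xnn: "0 \<le> (\<integral>w. f w \<partial>M)" by (intro integral_nonneg_AE AE_I2 nn)
  ultimately show "(\<integral>w. f w \<partial>M) = c" using ennreal_inj[OF xnn c] by simp
qed

definition K where "K A l u = a * measure H A * tau 1 (l + u) * Fh A l u"

lemma DERIV_Fh: assumes l: "l + u > 0"
  shows "DERIV (Fh A l) u :> Fh A l u * (- a * measure H A * tau 1 (l + u))"
proof -
  let ?h = "measure H A"
  have d0: "DERIV (\<lambda>u. l + u) u :> 1" by (auto intro!: derivative_eq_intros)
  have d1: "DERIV (\<lambda>u. psi (l + u)) u :> tau 1 (l + u) * 1"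
    by (rule DERIV_chain2[OF DERIV_psi[OF l] d0])
  have d2: "DERIV (\<lambda>u. - a * (psi l + ?h * (psi (l + u) - psi l))) u :> - a * (0 + ?h * (tau 1 (l + u) * 1 - 0))"
    by (intro DERIV_cmult DERIV_add DERIV_const DERIV_diff d1)
  have "DERIV (\<lambda>u. exp (- a * (psi l + ?h * (psi (l + u) - psi l)))) u :>
      exp (- a * (psi l + ?h * (psi (l + u) - psi l))) * (- a * (0 + ?h * (tau 1 (l + u) * 1 - 0)))"
    by (rule DERIV_chain2[OF DERIV_exp d2])
  then show ?thesis unfolding Fh_def[abs_def] by (rule DERIV_cong) simp
qed

lemma mom1':
  assumes A: "A \<in> sets borel" and l: "l > 0" and u: "u \<ge> 0"
  shows "(\<integral>\<^sup>+ w. ennreal (Y A w * exp (- (l * T w + u * Y A w))) \<partial>M) = ennreal (K A l u)"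
proof (rule dq_lemma[where \<Phi>="\<lambda>v. Fh A l (u + v)"])
  have [measurable]: "Y A \<in> borel_measurable M" using A by (rule Y_meas)
  show "Y A \<in> borel_measurable M" by measurable
  show "(\<lambda>w. exp (- (l * T w + u * Y A w))) \<in> borel_measurable M" by measurable
  show "0 \<le> Y A w" for w by (simp add: Y_def)
  show "0 \<le> exp (- (l * T w + u * Y A w))" for w by simp
  show "integrable M (\<lambda>w. exp (- (l * T w + u * Y A w)))"
  proof (rule M.integrable_const_bound[where B=1])
    show "AE w in M. norm (exp (- (l * T w + u * Y A w))) \<le> 1"
    proof (intro AE_I2)
      fix w
      have "0 \<le> l * T w + u * Y A w" using l u T_nonneg[of w] by (simp add: Y_def)
      then show "norm (exp (- (l * T w + u * Y A w))) \<le> 1" by simp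
    qed
    show "(\<lambda>w. exp (- (l * T w + u * Y A w))) \<in> borel_measurable M" by measurable
  qed
  show "(\<integral>w. exp (- (l * T w + u * Y A w)) * exp (- v * Y A w) \<partial>M) = Fh A l (u + v)" if v: "v \<ge> 0" for v
  proof -
    have "(\<lambda>w. exp (- (l * T w + u * Y A w)) * exp (- v * Y A w)) = (\<lambda>w. exp (- (l * T w + (u + v) * Y A w)))"
      by (simp add: fun_eq_iff algebra_simps flip: exp_add)
    then show ?thesis using laplace_real[OF A, of l "u + v"] l u v by simp
  qed
  have d0: "DERIV (\<lambda>v. u + v) 0 :> 1" by (auto intro!: derivative_eq_intros)
  have "DERIV (\<lambda>v. Fh A l (u + v)) 0 :> Fh A l (u + 0) * (- a * measure H A * tau 1 (l + (u + 0))) * 1"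
    by (rule DERIV_chain2[OF DERIV_Fh d0]) (use l u in simp)
  then show "DERIV (\<lambda>v. Fh A l (u + v)) 0 :> - K A l u"
    by (rule DERIV_cong) (simp add: K_def)
qed

lemma DERIV_K: assumes l: "l > 0"
  shows "DERIV (K A l) 0 :> - (Fh A l 0 * (a * measure H A * tau 2 l + (a * measure H A * tau 1 l)^2))"
proof -
  let ?h = "measure H A"
  have d0: "DERIV (\<lambda>v. l + v) 0 :> 1" by (auto intro!: derivative_eq_intros)
  have dt: "DERIV (\<lambda>v. tau 1 (l + v)) 0 :> - tau (Suc 1) (l + 0) * 1"
    by (rule DERIV_chain2[OF DERIV_tau d0]) (use l in simp_all)
  have dF: "DERIV (Fh A l) 0 :> Fh A l 0 * (- a * ?h * tau 1 (l + 0))"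
    by (rule DERIV_Fh) (use l in simp)
  have "DERIV (\<lambda>v. a * ?h * tau 1 (l + v) * Fh A l v) 0 :>
       (a * ?h * (- tau (Suc 1) (l + 0) * 1)) * Fh A l 0 + (Fh A l 0 * (- a * ?h * tau 1 (l + 0))) * (a * ?h * tau 1 (l + 0))"
    by (intro DERIV_mult DERIV_cmult dt dF)
  then show ?thesis unfolding K_def[abs_def]
    by (rule DERIV_cong) (simp add: algebra_simps power2_eq_square numeral_2_eq_2)
qed

lemma mom1:
  assumes A: "A \<in> sets borel" and l: "l > 0"
  shows "(\<integral>\<^sup>+ w. ennreal (Y A w * exp (- l * T w)) \<partial>M) = ennreal (a * measure H A * tau 1 l * exp (- a * psi l))"
  using mom1'[OF A l, of 0] by (simp add: K_def Fh_def)

lemma mom2: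
  assumes A: "A \<in> sets borel" and l: "l > 0"
  shows "(\<integral>\<^sup>+ w. ennreal ((Y A w)^2 * exp (- l * T w)) \<partial>M) =
     ennreal (exp (- a * psi l) * ((a * measure H A * tau 1 l)^2 + a * measure H A * tau 2 l))"
proof -
  have [measurable]: "Y A \<in> borel_measurable M" using A by (rule Y_meas)
  have Kn: "K A l v \<ge> 0" if "v \<ge> 0" for v
    unfolding K_def Fh_def using a_pos tau_nonneg[of 1 "l + v"] by simp
  have KK: "integrable M (\<lambda>w. Y A w * exp (- (l * T w + v * Y A w)))"
       "(\<integral>w. Y A w * exp (- (l * T w + v * Y A w)) \<partial>M) = K A l v" if v: "v \<ge> 0" for v
  proof -
    have m1: "(\<lambda>w. Y A w * exp (- (l * T w + v * Y A w))) \<in> borel_measurable M" by measurable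
    have n1: "\<And>w. 0 \<le> Y A w * exp (- (l * T w + v * Y A w))" by (simp add: Y_def)
    show "integrable M (\<lambda>w. Y A w * exp (- (l * T w + v * Y A w)))"
      by (rule nn_to_real(1)[OF m1 n1 mom1'[OF A l v] Kn[OF v]])
    show "(\<integral>w. Y A w * exp (- (l * T w + v * Y A w)) \<partial>M) = K A l v"
      by (rule nn_to_real(2)[OF m1 n1 mom1'[OF A l v] Kn[OF v]])
  qed
  have "(\<integral>\<^sup>+ w. ennreal (Y A w * (Y A w * exp (- (l * T w + 0 * Y A w)))) \<partial>M) =
     ennreal (Fh A l 0 * (a * measure H A * tau 2 l + (a * measure H A * tau 1 l)^2))"
  proof (rule dq_lemma[where \<Phi>="K A l"])
    show "Y A \<in> borel_measurable M" by measurable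
    show "(\<lambda>w. Y A w * exp (- (l * T w + 0 * Y A w))) \<in> borel_measurable M" by measurable
    show "0 \<le> Y A w" for w by (simp add: Y_def)
    show "0 \<le> Y A w * exp (- (l * T w + 0 * Y A w))" for w by (simp add: Y_def)
    show "integrable M (\<lambda>w. Y A w * exp (- (l * T w + 0 * Y A w)))" using KK(1)[of 0] by simp
    show "(\<integral>w. Y A w * exp (- (l * T w + 0 * Y A w)) * exp (- v * Y A w) \<partial>M) = K A l v" if v: "v \<ge> 0" for v
    proof -
      have "(\<lambda>w. Y A w * exp (- (l * T w + 0 * Y A w)) * exp (- v * Y A w)) = (\<lambda>w. Y A w * exp (- (l * T w + v * Y A w)))"
        by (simp add: fun_eq_iff algebra_simps flip: exp_add)
      then show ?thesis using KK(2)[OF v] by simp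
    qed
    show "DERIV (K A l) 0 :> - (Fh A l 0 * (a * measure H A * tau 2 l + (a * measure H A * tau 1 l)^2))"
      by (rule DERIV_K[OF l])
  qed
  then show ?thesis by (simp add: Fh_def power2_eq_square algebra_simps)
qed

end


context crm begin

definition R where "R A w = Y A w / T w"

interpretation P: pair_sigma_finite M "lborel :: real measure"
  by (rule pair_sigma_finite.intro) (rule M.sigma_finite_measure_axioms, rule sigma_finite_lborel)

lemma T_pos: "Tn w < \<infinity> \<Longrightarrow> Tn w \<noteq> 0 \<Longrightarrow> T w > 0"
proof -
  assume f: "Tn w < \<infinity>" and nz: "Tn w \<noteq> 0"
  have "T w \<noteq> 0" using nz Tn_eq[OF f] by auto
  then show ?thesis using T_nonneg[of w] by simp
qed

lemma inner1:
  assumes f: "Tn w < \<infinity>" and nz: "Tn w \<noteq> 0"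
  shows "(\<integral>\<^sup>+ l. ennreal (indicator {0<..} l * (Y A w * exp (- l * T w))) \<partial>lborel) = ennreal (R A w)"
proof -
  have t: "T w > 0" by (rule T_pos[OF f nz])
  have Yn: "Y A w \<ge> 0" by (simp add: Y_def)
  have "(\<integral>\<^sup>+ l. ennreal (indicator {0<..} l * (Y A w * exp (- l * T w))) \<partial>lborel) =
      (\<integral>\<^sup>+ l. ennreal (Y A w) * (ennreal (l^0 * exp (- l * T w)) * indicator {0<..} l) \<partial>lborel)"
    using Yn by (intro nn_integral_cong) (auto simp: indicator_def ennreal_mult)
  also have "\<dots> = ennreal (Y A w) * (\<integral>\<^sup>+ l. ennreal (l^0 * exp (- l * T w)) * indicator {0<..} l \<partial>lborel)"
    by (rule nn_integral_cmult) measurable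
  also have "\<dots> = ennreal (Y A w) * ennreal (fact 0 / T w ^ (0 + 1))" by (simp only: nn_integral_pow_exp[OF t])
  also have "\<dots> = ennreal (R A w)" using Yn t by (simp add: R_def ennreal_mult[symmetric] divide_nonneg_pos)
  finally show ?thesis .
qed

lemma inner2:
  assumes f: "Tn w < \<infinity>" and nz: "Tn w \<noteq> 0"
  shows "(\<integral>\<^sup>+ l. ennreal (indicator {0<..} l * (l * ((Y A w)^2 * exp (- l * T w)))) \<partial>lborel) = ennreal ((R A w)^2)"
proof -
  have t: "T w > 0" by (rule T_pos[OF f nz])
  have Yn: "(Y A w)^2 \<ge> 0" by simp
  have "(\<integral>\<^sup>+ l. ennreal (indicator {0<..} l * (l * ((Y A w)^2 * exp (- l * T w)))) \<partial>lborel) =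
      (\<integral>\<^sup>+ l. ennreal ((Y A w)^2) * (ennreal (l^1 * exp (- l * T w)) * indicator {0<..} l) \<partial>lborel)"
    using Yn by (intro nn_integral_cong) (auto simp: indicator_def ennreal_mult[symmetric] mult_ac)
  also have "\<dots> = ennreal ((Y A w)^2) * (\<integral>\<^sup>+ l. ennreal (l^1 * exp (- l * T w)) * indicator {0<..} l \<partial>lborel)"
    by (rule nn_integral_cmult) measurable
  also have "\<dots> = ennreal ((Y A w)^2) * ennreal (fact 1 / T w ^ (1 + 1))" by (simp only: nn_integral_pow_exp[OF t])
  also have "\<dots> = ennreal ((R A w)^2)" using Yn t
    by (simp add: R_def ennreal_mult[symmetric] power_divide power2_eq_square)
  finally show ?thesis .
qed

definition q1 where "q1 l = a * tau 1 l * exp (- a * psi l)"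

lemma swap1: assumes A: "A \<in> sets borel"
  shows "(\<integral>\<^sup>+ w. ennreal (R A w) \<partial>M) = (\<integral>\<^sup>+ l. ennreal (indicator {0<..} l * (measure H A * q1 l)) \<partial>lborel)"
proof -
  have [measurable]: "Y A \<in> borel_measurable M" using A by (rule Y_meas)
  have "(\<integral>\<^sup>+ w. ennreal (R A w) \<partial>M) =
      (\<integral>\<^sup>+ w. (\<integral>\<^sup>+ l. ennreal (indicator {0<..} l * (Y A w * exp (- l * T w))) \<partial>lborel) \<partial>M)"
  proof (rule nn_integral_cong_AE)
    show "AE w in M. ennreal (R A w) = (\<integral>\<^sup>+ l. ennreal (indicator {0<..} l * (Y A w * exp (- l * T w))) \<partial>lborel)"
      using AE_fin AE_nz by eventually_elim (rule inner1[symmetric])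
  qed
  also have "\<dots> = (\<integral>\<^sup>+ l. (\<integral>\<^sup>+ w. ennreal (indicator {0<..} l * (Y A w * exp (- l * T w))) \<partial>M) \<partial>lborel)"
    by (rule P.Fubini'[symmetric]) measurable
  also have "\<dots> = (\<integral>\<^sup>+ l. ennreal (indicator {0<..} l * (measure H A * q1 l)) \<partial>lborel)"
  proof (rule nn_integral_cong)
    fix l :: real
    show "(\<integral>\<^sup>+ w. ennreal (indicator {0<..} l * (Y A w * exp (- l * T w))) \<partial>M) =
        ennreal (indicator {0<..} l * (measure H A * q1 l))"
    proof (cases "l > 0")
      case True
      then show ?thesis using mom1[OF A True] by (simp add: q1_def mult_ac)
    qed simp
  qed
  finally show ?thesis .
qed

lemma swap2: assumes A: "A \<in> sets borel"
  shows "(\<integral>\<^sup>+ w. ennreal ((R A w)^2) \<partial>M) = (\<integral>\<^sup>+ l. ennreal (indicator {0<..} l *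
      (l * (exp (- a * psi l) * ((a * measure H A * tau 1 l)^2 + a * measure H A * tau 2 l)))) \<partial>lborel)"
proof -
  have [measurable]: "Y A \<in> borel_measurable M" using A by (rule Y_meas)
  have "(\<integral>\<^sup>+ w. ennreal ((R A w)^2) \<partial>M) =
      (\<integral>\<^sup>+ w. (\<integral>\<^sup>+ l. ennreal (indicator {0<..} l * (l * ((Y A w)^2 * exp (- l * T w)))) \<partial>lborel) \<partial>M)"
  proof (rule nn_integral_cong_AE)
    show "AE w in M. ennreal ((R A w)^2) = (\<integral>\<^sup>+ l. ennreal (indicator {0<..} l * (l * ((Y A w)^2 * exp (- l * T w)))) \<partial>lborel)"
      using AE_fin AE_nz by eventually_elim (rule inner2[symmetric])
  qed
  also have "\<dots> = (\<integral>\<^sup>+ l. (\<integral>\<^sup>+ w. ennreal (indicator {0<..} l * (l * ((Y A w)^2 * exp (- l * T w)))) \<partial>M) \<partial>lborel)"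
    by (rule P.Fubini'[symmetric]) measurable
  also have "\<dots> = (\<integral>\<^sup>+ l. ennreal (indicator {0<..} l *
      (l * (exp (- a * psi l) * ((a * measure H A * tau 1 l)^2 + a * measure H A * tau 2 l)))) \<partial>lborel)"
  proof (rule nn_integral_cong)
    fix l :: real
    show "(\<integral>\<^sup>+ w. ennreal (indicator {0<..} l * (l * ((Y A w)^2 * exp (- l * T w)))) \<partial>M) =
        ennreal (indicator {0<..} l * (l * (exp (- a * psi l) * ((a * measure H A * tau 1 l)^2 + a * measure H A * tau 2 l))))"
    proof (cases "l > 0")
      case True
      have "(\<integral>\<^sup>+ w. ennreal (indicator {0<..} l * (l * ((Y A w)^2 * exp (- l * T w)))) \<partial>M) =
          (\<integral>\<^sup>+ w. ennreal l * ennreal ((Y A w)^2 * exp (- l * T w)) \<partial>M)"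
        using True by (intro nn_integral_cong) (simp add: ennreal_mult)
      also have "\<dots> = ennreal l * (\<integral>\<^sup>+ w. ennreal ((Y A w)^2 * exp (- l * T w)) \<partial>M)"
        by (rule nn_integral_cmult) measurable
      also have "\<dots> = ennreal (l * (exp (- a * psi l) * ((a * measure H A * tau 1 l)^2 + a * measure H A * tau 2 l)))"
        unfolding mom2[OF A True] using True by (intro ennreal_mult'[symmetric]) simp
      finally show ?thesis using True by simp
    qed simp
  qed
  finally show ?thesis .
qed

end


context levy begin

lemma cont_meas: fixes f :: "real \<Rightarrow> real" shows "continuous_on {0<..} f \<Longrightarrow> (\<lambda>l. ennreal (indicator {0<..} l * f l)) \<in> borel_measurable borel"
proof -
  assume c: "continuous_on {0<..} f"
  have "(\<lambda>l. indicator {0<..} l *\<^sub>R f l) \<in> borel_measurable borel"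
    by (rule borel_measurable_continuous_on_indicator[OF _ c]) (rule borel_open, rule open_greaterThan)
  then have "(\<lambda>l. indicator {0<..} l * f l) \<in> borel_measurable borel" by simp
  then show ?thesis by measurable
qed

end

context crm begin

definition q2 where "q2 l = l * exp (- a * psi l) * (a * tau 1 l)^2"
definition r where "r l = l * exp (- a * psi l) * (a * tau 2 l)"

lemma q1_meas: "(\<lambda>l. ennreal (indicator {0<..} l * q1 l)) \<in> borel_measurable borel"
  unfolding q1_def by (intro cont_meas continuous_intros cont_tau cont_psi) auto
lemma q2_meas: "(\<lambda>l. ennreal (indicator {0<..} l * q2 l)) \<in> borel_measurable borel"
  unfolding q2_def by (intro cont_meas continuous_intros cont_tau cont_psi) auto
lemma r_meas: "(\<lambda>l. ennreal (indicator {0<..} l * r l)) \<in> borel_measurable borel"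
  unfolding r_def by (intro cont_meas continuous_intros cont_tau cont_psi) auto

lemma H_UNIV: "measure H UNIV = 1"
  using H.prob_space sets_eq_imp_space_eq[OF H_sets] by simp

lemma R_UNIV: "AE w in M. R UNIV w = 1"
  using AE_fin AE_nz
proof eventually_elim
  case (elim w)
  have "T w > 0" by (rule T_pos[OF elim])
  then show ?case by (simp add: R_def Y_UNIV)
qed

lemma E1_UNIV: "(\<integral>\<^sup>+ w. ennreal (R UNIV w) \<partial>M) = 1"
proof -
  have "(\<integral>\<^sup>+ w. ennreal (R UNIV w) \<partial>M) = (\<integral>\<^sup>+ w. 1 \<partial>M)"
    by (rule nn_integral_cong_AE) (use R_UNIV in \<open>eventually_elim, simp\<close>)
  then show ?thesis by (simp add: M.emeasure_space_1)
qed

lemma E2_UNIV: "(\<integral>\<^sup>+ w. ennreal ((R UNIV w)^2) \<partial>M) = 1"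
proof -
  have "(\<integral>\<^sup>+ w. ennreal ((R UNIV w)^2) \<partial>M) = (\<integral>\<^sup>+ w. 1 \<partial>M)"
    by (rule nn_integral_cong_AE) (use R_UNIV in \<open>eventually_elim, simp\<close>)
  then show ?thesis by (simp add: M.emeasure_space_1)
qed

lemma Q1: "(\<integral>\<^sup>+ l. ennreal (indicator {0<..} l * q1 l) \<partial>lborel) = 1"
  using swap1[of UNIV] E1_UNIV H_UNIV by simp

lemma ER: assumes A: "A \<in> sets borel" shows "(\<integral>\<^sup>+ w. ennreal (R A w) \<partial>M) = ennreal (measure H A)"
proof -
  have "(\<integral>\<^sup>+ w. ennreal (R A w) \<partial>M) = (\<integral>\<^sup>+ l. ennreal (measure H A) * ennreal (indicator {0<..} l * q1 l) \<partial>lborel)"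
    unfolding swap1[OF A] by (intro nn_integral_cong) (simp add: ennreal_mult'[symmetric] mult_ac)
  also have "\<dots> = ennreal (measure H A) * (\<integral>\<^sup>+ l. ennreal (indicator {0<..} l * q1 l) \<partial>lborel)"
    by (rule nn_integral_cmult) (use q1_meas in simp)
  finally show ?thesis using Q1 by simp
qed

definition X2 where "X2 = (\<integral>\<^sup>+ l. ennreal (indicator {0<..} l * q2 l) \<partial>lborel)"
definition I2 where "I2 = (\<integral>\<^sup>+ l. ennreal (indicator {0<..} l * r l) \<partial>lborel)"

lemma ER2: assumes A: "A \<in> sets borel"
  shows "(\<integral>\<^sup>+ w. ennreal ((R A w)^2) \<partial>M) = ennreal ((measure H A)^2) * X2 + ennreal (measure H A) * I2"
proof -
  let ?h = "measure H A"
  have "(\<integral>\<^sup>+ w. ennreal ((R A w)^2) \<partial>M) =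
      (\<integral>\<^sup>+ l. ennreal (?h^2) * ennreal (indicator {0<..} l * q2 l) + ennreal ?h * ennreal (indicator {0<..} l * r l) \<partial>lborel)"
    unfolding swap2[OF A]
  proof (intro nn_integral_cong)
    fix l :: real
    have e: "indicator {0<..} l * (l * (exp (- a * psi l) * ((a * ?h * tau 1 l)^2 + a * ?h * tau 2 l))) =
        ?h^2 * (indicator {0<..} l * q2 l) + ?h * (indicator {0<..} l * r l)"
      by (simp add: q2_def r_def algebra_simps power2_eq_square)
    have n1: "0 \<le> ?h^2 * (indicator {0<..} l * q2 l)"
      unfolding q2_def by (auto simp: indicator_def)
    have n2: "0 \<le> ?h * (indicator {0<..} l * r l)"
      unfolding r_def using tau_nonneg[of 2 l] a_pos by (auto simp: indicator_def)
    show "ennreal (indicator {0<..} l * (l * (exp (- a * psi l) * ((a * ?h * tau 1 l)^2 + a * ?h * tau 2 l)))) =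
        ennreal (?h^2) * ennreal (indicator {0<..} l * q2 l) + ennreal ?h * ennreal (indicator {0<..} l * r l)"
      unfolding e ennreal_plus[OF n1 n2]
      by (simp add: ennreal_mult'[symmetric])
  qed
  also have "\<dots> = (\<integral>\<^sup>+ l. ennreal (?h^2) * ennreal (indicator {0<..} l * q2 l) \<partial>lborel) +
      (\<integral>\<^sup>+ l. ennreal ?h * ennreal (indicator {0<..} l * r l) \<partial>lborel)"
    by (rule nn_integral_add) (use q2_meas r_meas in simp_all)
  also have "\<dots> = ennreal (?h^2) * X2 + ennreal ?h * I2"
    unfolding X2_def I2_def
    by (subst nn_integral_cmult, use q2_meas in simp, subst nn_integral_cmult, use r_meas in simp_all)
  finally show ?thesis .
qed

lemma XI: "X2 + I2 = 1"
  using ER2[of UNIV] E2_UNIV H_UNIV by simp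

lemma I2_eq: "I2 = ennreal (Ia \<rho> a)"
proof -
  have "I2 = (\<integral>\<^sup>+ l. ennreal a * ennreal (gg a l) \<partial>lborel)"
    unfolding I2_def using a_pos
    by (intro nn_integral_cong) (simp add: r_def gg_def ennreal_mult'[symmetric] mult_ac)
  also have "\<dots> = ennreal a * (\<integral>\<^sup>+ l. ennreal (gg a l) \<partial>lborel)"
    by (rule nn_integral_cmult) (use gg_meas in measurable)
  also have "\<dots> = ennreal a * ennreal (integral\<^sup>L lborel (gg a))" using J_eq[OF a_pos] by simp
  also have "\<dots> = ennreal (Ia \<rho> a)" unfolding Ia_eq using a_pos by (simp add: ennreal_mult')
  finally show ?thesis .
qed

end


context crm begin

lemma Ia_nonneg: "Ia \<rho> a \<ge> 0"
  unfolding Ia_eq using a_pos gg_nonneg by (simp add: integral_nonneg_AE)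

lemma X2_eq: "X2 = ennreal (1 - Ia \<rho> a)" and Ia_le1: "Ia \<rho> a \<le> 1"
proof -
  let ?i = "Ia \<rho> a"
  have xi: "X2 + ennreal ?i = 1" using XI I2_eq by simp
  then have "X2 \<le> 1" by (metis add_increasing2 order_refl zero_le)
  then have fin: "X2 < \<infinity>" by (simp add: le_less_trans)
  define x where "x = enn2real X2"
  have X: "X2 = ennreal x" unfolding x_def using fin by simp
  have x0: "x \<ge> 0" unfolding x_def by simp
  have "ennreal (x + ?i) = ennreal 1" using xi X ennreal_plus[OF x0 Ia_nonneg] by simp
  then have "x + ?i = 1" using x0 Ia_nonneg by (subst (asm) ennreal_inj) auto
  then show "X2 = ennreal (1 - ?i)" "?i \<le> 1" using X x0 by auto
qed

lemma main:
  assumes A: "A \<in> sets borel"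
  shows "M.expectation (\<lambda>w. hnrmi \<mu> w A) = measure H A \<and>
         M.variance (\<lambda>w. hnrmi \<mu> w A) = measure H A * (1 - measure H A) * Ia \<rho> a"
proof -
  let ?h = "measure H A" and ?i = "Ia \<rho> a"
  have [measurable]: "Y A \<in> borel_measurable M" using A by (rule Y_meas)
  have Rm: "R A \<in> borel_measurable M" unfolding R_def[abs_def] by measurable
  have R2m: "(\<lambda>w. (R A w)^2) \<in> borel_measurable M" unfolding R_def[abs_def] by measurable
  have Rn: "R A w \<ge> 0" for w by (simp add: R_def Y_def T_def)
  have hn: "hnrmi \<mu> w A = R A w" if "w \<in> space M" for w
    using space_mu[OF that] by (simp add: hnrmi_def R_def Y_def T_def Tn_def)
  have h0: "?h \<ge> 0" by simp
  have e1: "integrable M (R A)" "M.expectation (R A) = ?h"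
    using nn_to_real[OF Rm Rn ER[OF A] h0] by auto
  have v: "(\<integral>\<^sup>+ w. ennreal ((R A w)^2) \<partial>M) = ennreal (?h^2 * (1 - ?i) + ?h * ?i)"
  proof -
    have "(\<integral>\<^sup>+ w. ennreal ((R A w)^2) \<partial>M) = ennreal (?h^2) * ennreal (1 - ?i) + ennreal ?h * ennreal ?i"
      using ER2[OF A] X2_eq I2_eq by simp
    also have "\<dots> = ennreal (?h^2 * (1 - ?i)) + ennreal (?h * ?i)"
      using Ia_le1 Ia_nonneg by (simp add: ennreal_mult')
    also have "\<dots> = ennreal (?h^2 * (1 - ?i) + ?h * ?i)"
      by (rule ennreal_plus[symmetric]) (use Ia_le1 Ia_nonneg in simp_all)
    finally show ?thesis .
  qed
  have vn: "0 \<le> ?h^2 * (1 - ?i) + ?h * ?i" using Ia_le1 Ia_nonneg by simp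
  have e2: "integrable M (\<lambda>w. (R A w)^2)" "M.expectation (\<lambda>w. (R A w)^2) = ?h^2 * (1 - ?i) + ?h * ?i"
    using nn_to_real[OF R2m _ v vn] by auto
  have ee: "M.expectation (\<lambda>w. hnrmi \<mu> w A) = M.expectation (R A)"
    by (rule Bochner_Integration.integral_cong) (simp_all add: hn)
  have vv: "M.variance (\<lambda>w. hnrmi \<mu> w A) = M.variance (R A)"
    unfolding ee by (rule Bochner_Integration.integral_cong) (simp_all add: hn)
  have "M.variance (R A) = ?h^2 * (1 - ?i) + ?h * ?i - ?h^2"
    using M.variance_eq[OF e1(1) e2(1)] e1(2) e2(2) by simp
  also have "\<dots> = ?h * (1 - ?h) * ?i" by (simp add: algebra_simps power2_eq_square)
  finally show ?thesis using ee vv e1(2) by simp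
qed

end

theorem proposition2:
  fixes \<rho> :: "real measure" and H :: "'x::polish_space measure" and a :: real
    and M :: "'w measure" and \<mu> :: "'w \<Rightarrow> 'x measure"
  assumes rho_sets: "sets \<rho> = sets borel"
    and rho_support: "emeasure \<rho> {..0} = 0"
    and rho_levy: "(\<integral>\<^sup>+ s. ennreal (min s 1) \<partial>\<rho>) < \<infinity>"
    and rho_infinite: "emeasure \<rho> {0<..} = \<infinity>"
    and tau2: "(\<integral>\<^sup>+ s. ennreal (indicator {1..} s * s\<^sup>2) \<partial>\<rho>) < \<infinity>"
    and H_prob: "prob_space H" and H_sets: "sets H = sets borel"
    and H_nonatomic: "\<And>x. emeasure H {x} = 0"
    and a_pos: "a > 0"
    and M_prob: "prob_space M"
    and mu_sets: "\<And>w. w \<in> space M \<Longrightarrow> sets (\<mu> w) = sets borel"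
    and mu_meas: "\<And>A. A \<in> sets borel \<Longrightarrow> (\<lambda>w. emeasure (\<mu> w) A) \<in> borel_measurable M"
    and mu_laplace: "\<And>(h :: 'x \<Rightarrow> real) A. h \<in> borel_measurable borel \<Longrightarrow> (\<forall>x. h x \<ge> 0)
        \<Longrightarrow> bounded (range h) \<Longrightarrow> A \<in> sets borel \<Longrightarrow>
        prob_space.expectation M (\<lambda>w. neg_exp_enn (\<integral>\<^sup>+ x. ennreal (indicator A x * h x) \<partial>(\<mu> w)))
        = exp (- a * (\<integral>x. indicator A x * (\<integral>s. 1 - exp (- s * h x) \<partial>\<rho>) \<partial>H))"
  shows "(\<forall>A \<in> sets borel.
            prob_space.expectation M (\<lambda>w. hnrmi \<mu> w A) = measure H A \<and>
            prob_space.variance M (\<lambda>w. hnrmi \<mu> w A) = measure H A * (1 - measure H A) * Ia \<rho> a)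
       \<and> (\<forall>b>0. set_integrable lborel {0<..} (Ia_integrand \<rho> b))
       \<and> (\<lambda>b. Ia \<rho> b) \<in> O[at_top](\<lambda>b. 1 / b)"
proof -
  have L: "levy \<rho>" by (rule levy.intro[OF rho_sets rho_support rho_levy rho_infinite tau2])
  have C: "crm \<rho> H a M \<mu>"
    by (rule crm.intro[OF L crm_axioms.intro[OF H_prob H_sets a_pos M_prob mu_sets mu_meas mu_laplace]])
  show ?thesis
  proof (intro conjI ballI allI impI)
    fix A :: "'x set" assume "A \<in> sets borel"
    from crm.main[OF C this]
    show "prob_space.expectation M (\<lambda>w. hnrmi \<mu> w A) = measure H A"
      and "prob_space.variance M (\<lambda>w. hnrmi \<mu> w A) = measure H A * (1 - measure H A) * Ia \<rho> a"
      by auto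
  next
    fix b :: real assume "b > 0"
    then show "set_integrable lborel {0<..} (Ia_integrand \<rho> b)" by (rule levy.set_int[OF L])
  next
    show "(\<lambda>b. Ia \<rho> b) \<in> O[at_top](\<lambda>b. 1 / b)" by (rule levy.Ia_bigo[OF L])
  qed
qed


end
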